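(* Let $K$ be a field, $1\le n\le d$, $X=\{x_1,\dots,x_n\}$, and let $A=\{a_1^{(d_1)},\dots,a_m^{(d_m)}\}\subset K$ be a multiset ($a_i$ repeated $d_i$ times, $a_i$ pairwise distinct) with $d_1+\cdots+d_m=d$. Let $f=\prod_{i=1}^m(x-a_i)^{d_i}=x^d+f_{d-1}x^{d-1}+\cdots+f_0$ and $G=\{g_1,\dots,g_n\}$ with $g_i(x_1,\dots,x_i)=\sum_{k=i-1}^d f_k\,h^{(i)}_{k-i+1}$ ($f_d=1$). Then: (1) the ideal $(G)\subset K[X]$ is symmetric, i.e. if $g(X)\in (G)$ then $g(x_{\sigma(1)},\dots,x_{\sigma(n)})\in (G)$ for every permutation $\sigma$ of $\{1,\dots,n\}$; (2) for every symmetric polynomial $h\in K[X]$, the normal form $r_G(h)$ of $h$ modulo $G$ with respect to the lexicographic order with $x_1\prec\cdots\prec x_n$ is a symmetric polynomial of degree $\le d-n$ in each variable.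
   Context: $h^{(i)}_j=\sum_{k_1+\cdots+k_i=j}x_1^{k_1}\cdots x_i^{k_i}$ is the complete homogeneous symmetric polynomial of degree $j$ in $x_1,\dots,x_i$. Since each $g_i$ has leading term $x_i^{d-i+1}$ for the lexicographic order, $G$ is a Gröbner basis of $(G)$ and $r_G(h)$ is well defined. *)

theory Defs
  imports "HOL-Library.Poly_Mapping" "HOL-Library.Multiset"
          "HOL-Computational_Algebra.Polynomial" "HOL-Combinatorics.Permutations"
begin

text \<open>Multivariate polynomials: maps from monomials (exponent vectors nat =>0 nat,
  variable x_i has index i) to coefficients.\<close>
type_synonym 'a mpoly = "(nat \<Rightarrow>\<^sub>0 nat) \<Rightarrow>\<^sub>0 'a"

definition in_KX :: "nat \<Rightarrow> 'a::zero mpoly \<Rightarrow> bool" where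
  "in_KX n p \<longleftrightarrow> (\<forall>t\<in>Poly_Mapping.keys p. Poly_Mapping.keys t \<subseteq> {1..n})"

definition mconst :: "'a::zero \<Rightarrow> 'a mpoly" where
  "mconst c = Poly_Mapping.single 0 c"

definition hcomp :: "nat \<Rightarrow> nat \<Rightarrow> 'a::comm_ring_1 mpoly" where
  "hcomp i j = (\<Sum>t\<in>{t::nat \<Rightarrow>\<^sub>0 nat. Poly_Mapping.keys t \<subseteq> {1..i} \<and> (\<Sum>k\<in>{1..i}. Poly_Mapping.lookup t k) = j}.
                  Poly_Mapping.single t 1)"

definition fpoly :: "'a::field multiset \<Rightarrow> 'a poly" where
  "fpoly A = (\<Prod>a\<in>#A. [:-a, 1:])"

definition gpoly :: "'a::field multiset \<Rightarrow> nat \<Rightarrow> 'a mpoly" where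
  "gpoly A i = (\<Sum>k\<in>{i-1..size A}. mconst (coeff (fpoly A) k) * hcomp i (k - (i - 1)))"

definition gen_ideal :: "nat \<Rightarrow> (nat \<Rightarrow> 'a::comm_ring_1 mpoly) \<Rightarrow> 'a mpoly set" where
  "gen_ideal n g = {p. \<exists>q. (\<forall>i\<in>{1..n}. in_KX n (q i)) \<and> p = (\<Sum>i=1..n. q i * g i)}"

definition perm_poly :: "(nat \<Rightarrow> nat) \<Rightarrow> 'a::comm_ring_1 mpoly \<Rightarrow> 'a mpoly" where
  "perm_poly \<sigma> p = (\<Sum>t\<in>Poly_Mapping.keys p.
      Poly_Mapping.single (\<Sum>i\<in>Poly_Mapping.keys t. Poly_Mapping.single (\<sigma> i) (Poly_Mapping.lookup t i)) (Poly_Mapping.lookup p t))"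

definition symmetric_poly :: "nat \<Rightarrow> 'a::comm_ring_1 mpoly \<Rightarrow> bool" where
  "symmetric_poly n p \<longleftrightarrow> (\<forall>\<sigma>. \<sigma> permutes {1..n} \<longrightarrow> perm_poly \<sigma> p = p)"

text \<open>lexicographic order with x_1 < x_2 < ... (higher-index variables more significant)\<close>
definition mon_lex_less :: "(nat \<Rightarrow>\<^sub>0 nat) \<Rightarrow> (nat \<Rightarrow>\<^sub>0 nat) \<Rightarrow> bool" where
  "mon_lex_less s t \<longleftrightarrow> (\<exists>k. Poly_Mapping.lookup s k < Poly_Mapping.lookup t k \<and> (\<forall>j>k. Poly_Mapping.lookup s j = Poly_Mapping.lookup t j))"

definition lead_mon :: "'a::zero mpoly \<Rightarrow> (nat \<Rightarrow>\<^sub>0 nat)" where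
  "lead_mon p = (THE t. t \<in> Poly_Mapping.keys p \<and> (\<forall>s\<in>Poly_Mapping.keys p. s \<noteq> t \<longrightarrow> mon_lex_less s t))"

definition mon_dvd :: "(nat \<Rightarrow>\<^sub>0 nat) \<Rightarrow> (nat \<Rightarrow>\<^sub>0 nat) \<Rightarrow> bool" where
  "mon_dvd s t \<longleftrightarrow> (\<forall>i. Poly_Mapping.lookup s i \<le> Poly_Mapping.lookup t i)"

definition normal_form :: "nat \<Rightarrow> (nat \<Rightarrow> 'a::comm_ring_1 mpoly) \<Rightarrow> 'a mpoly \<Rightarrow> 'a mpoly" where
  "normal_form n g h = (THE r. in_KX n r \<and> h - r \<in> gen_ideal n g \<and>
      (\<forall>t\<in>Poly_Mapping.keys r. \<forall>i\<in>{1..n}. \<not> mon_dvd (lead_mon (g i)) t))"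

end

theory Submission
  imports Defs
begin

abbreviation mon :: "(nat \<Rightarrow>\<^sub>0 nat) \<Rightarrow> 'a::comm_ring_1 mpoly" where
  "mon t \<equiv> Poly_Mapping.single t 1"

definition Xv :: "nat \<Rightarrow> 'a::comm_ring_1 mpoly" where
  "Xv i = mon (Poly_Mapping.single i 1)"

definition lin :: "((nat \<Rightarrow>\<^sub>0 nat) \<Rightarrow> 'a::comm_ring_1 mpoly) \<Rightarrow> 'a mpoly \<Rightarrow> 'a mpoly" where
  "lin \<phi> p = (\<Sum>t\<in>Poly_Mapping.keys p. mconst (Poly_Mapping.lookup p t) * \<phi> t)"

lemma mon_add: "mon (s + t) = (mon s * mon t :: 'a::comm_ring_1 mpoly)"
  by (simp add: mult_single)

lemma mon_zero: "mon 0 = (1::'a::comm_ring_1 mpoly)"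
  by (simp add: one_poly_mapping.abs_eq single.abs_eq)

lemma Xv_power: "Xv i ^ a = (mon (Poly_Mapping.single i a) :: 'a::comm_ring_1 mpoly)"
  by (induction a) (auto simp: Xv_def mon_zero mon_add[symmetric] single_add[symmetric])

lemma mconst_mult_single: "mconst c * Poly_Mapping.single t b = Poly_Mapping.single t (c * b)"
  by (simp add: mconst_def mult_single)

lemma mconst_mon: "mconst c * mon t = Poly_Mapping.single t c"
  by (simp add: mconst_mult_single)

lemma mconst_mult: "mconst a * mconst b = mconst (a * b)"
  by (simp add: mconst_def mult_single)

lemma mconst_1[simp]: "mconst 1 = 1"
  by (simp add: mconst_def mon_zero)

lemma mconst_0[simp]: "mconst 0 = 0"
  by (simp add: mconst_def)

lemma mconst_add: "mconst (a + b) = mconst a + mconst b"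
  by (simp add: mconst_def single_add)

lemma mconst_uminus: "mconst (- a) = - mconst a"
  by (simp add: mconst_def single_uminus)

lemma lookup_mconst_mult: "Poly_Mapping.lookup (mconst c * p) t = c * Poly_Mapping.lookup p t"
proof -
  have "mconst c * p = Poly_Mapping.map ((*) c) p"
    by (simp add: mconst_def mult_map_scale_conv_mult)
  then show ?thesis by (simp add: Poly_Mapping.map.rep_eq when_def)
qed

lemma keys_mconst_mult: "Poly_Mapping.keys (mconst c * p) \<subseteq> Poly_Mapping.keys p"
  by (auto simp: in_keys_iff lookup_mconst_mult)

lemma poly_expand: "p = (\<Sum>t\<in>Poly_Mapping.keys p. Poly_Mapping.single t (Poly_Mapping.lookup p t))"
  by (rule poly_mapping_eqI) (simp add: lookup_sum lookup_single when_def in_keys_iff)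

lemma lin_alt:
  assumes "finite T" "Poly_Mapping.keys p \<subseteq> T"
  shows "lin \<phi> p = (\<Sum>t\<in>T. mconst (Poly_Mapping.lookup p t) * \<phi> t)"
  unfolding lin_def
  by (rule sum.mono_neutral_left) (use assms in \<open>auto simp: in_keys_iff\<close>)

lemma lin_add: "lin \<phi> (p + q) = lin \<phi> p + lin \<phi> q"
proof -
  let ?T = "Poly_Mapping.keys p \<union> Poly_Mapping.keys q"
  have "lin \<phi> (p + q) = (\<Sum>t\<in>?T. mconst (Poly_Mapping.lookup (p+q) t) * \<phi> t)"
    by (rule lin_alt) (auto simp: keys_add)
  also have "\<dots> = (\<Sum>t\<in>?T. mconst (Poly_Mapping.lookup p t) * \<phi> t) + (\<Sum>t\<in>?T. mconst (Poly_Mapping.lookup q t) * \<phi> t)"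
    by (simp add: lookup_add mconst_add distrib_right sum.distrib)
  also have "\<dots> = lin \<phi> p + lin \<phi> q"
    using lin_alt[of ?T p \<phi>] lin_alt[of ?T q \<phi>] by auto
  finally show ?thesis .
qed

lemma lin_zero[simp]: "lin \<phi> 0 = 0"
  by (simp add: lin_def)

lemma lin_uminus: "lin \<phi> (- p) = - lin \<phi> p"
  by (simp add: lin_def mconst_uminus sum_negf)

lemma lin_diff: "lin \<phi> (p - q) = lin \<phi> p - lin \<phi> q"
  using lin_add[of \<phi> p "- q"] by (simp add: lin_uminus)

lemma lin_sum: "lin \<phi> (\<Sum>i\<in>I. f i) = (\<Sum>i\<in>I. lin \<phi> (f i))"
  by (induction I rule: infinite_finite_induct) (auto simp: lin_add)

lemma lin_single: "lin \<phi> (Poly_Mapping.single t c) = mconst c * \<phi> t"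
  by (cases "c = 0") (auto simp: lin_def)

lemma lin_mon: "lin \<phi> (mon t) = \<phi> t"
  by (simp add: lin_single)

lemma lin_mconst_mult: "lin \<phi> (mconst c * p) = mconst c * lin \<phi> p"
proof -
  have "lin \<phi> (mconst c * p) = (\<Sum>t\<in>Poly_Mapping.keys p. mconst (Poly_Mapping.lookup (mconst c * p) t) * \<phi> t)"
    by (rule lin_alt) (auto simp: keys_mconst_mult)
  also have "\<dots> = mconst c * lin \<phi> p"
    by (simp add: lin_def lookup_mconst_mult sum_distrib_left mconst_mult[symmetric] mult.assoc)
  finally show ?thesis .
qed

lemma lin_cong: "(\<And>t. t \<in> Poly_Mapping.keys p \<Longrightarrow> \<phi> t = \<psi> t) \<Longrightarrow> lin \<phi> p = lin \<psi> p"
  by (simp add: lin_def)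

lemma lin_id: "lin mon p = p"
  by (subst (2) poly_expand) (simp add: lin_def mconst_mon)

lemma lin_fun_add: "lin (\<lambda>t. \<phi> t + \<psi> t) p = lin \<phi> p + lin \<psi> p"
  by (simp add: lin_def distrib_left sum.distrib)

lemma lin_fun_diff: "lin (\<lambda>t. \<phi> t - \<psi> t) p = lin \<phi> p - lin \<psi> p"
  by (simp add: lin_def right_diff_distrib sum_subtractf)

lemma lin_fun_mult_left: "lin (\<lambda>t. c * \<phi> t) p = c * lin \<phi> p"
  by (simp add: lin_def sum_distrib_left mult.left_commute)

lemma lin_fun_mult_right: "lin (\<lambda>t. \<phi> t * c) p = lin \<phi> p * c"
  by (simp add: lin_def sum_distrib_right mult.assoc)

lemma lin_fun_zero: "lin (\<lambda>t. 0) p = 0"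
  by (simp add: lin_def)

lemma mult_expand: "p * q = (\<Sum>s\<in>Poly_Mapping.keys p. \<Sum>t\<in>Poly_Mapping.keys q.
     Poly_Mapping.single (s + t) (Poly_Mapping.lookup p s * Poly_Mapping.lookup q t))"
proof -
  have "p * q = (\<Sum>s\<in>Poly_Mapping.keys p. Poly_Mapping.single s (Poly_Mapping.lookup p s)) *
     (\<Sum>t\<in>Poly_Mapping.keys q. Poly_Mapping.single t (Poly_Mapping.lookup q t))"
    using poly_expand[of p] poly_expand[of q] by simp
  also have "\<dots> = (\<Sum>s\<in>Poly_Mapping.keys p. \<Sum>t\<in>Poly_Mapping.keys q.
     Poly_Mapping.single s (Poly_Mapping.lookup p s) * Poly_Mapping.single t (Poly_Mapping.lookup q t))"
    by (simp add: sum_product)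
  finally show ?thesis by (simp add: mult_single)
qed

lemma lin_mult_expand: "lin \<phi> (p * q) = (\<Sum>s\<in>Poly_Mapping.keys p. \<Sum>t\<in>Poly_Mapping.keys q.
     mconst (Poly_Mapping.lookup p s * Poly_Mapping.lookup q t) * \<phi> (s + t))"
  by (subst mult_expand) (simp add: lin_sum lin_single)

lemma lin_mult:
  assumes "\<And>s t. \<phi> (s + t) = \<phi> s * \<phi> t"
  shows "lin \<phi> (p * q) = lin \<phi> p * lin \<phi> q"
proof -
  have "lin \<phi> p * lin \<phi> q = (\<Sum>s\<in>Poly_Mapping.keys p. \<Sum>t\<in>Poly_Mapping.keys q.
     mconst (Poly_Mapping.lookup p s * Poly_Mapping.lookup q t) * (\<phi> s * \<phi> t))"
    unfolding lin_def sum_product by (simp add: mconst_mult[symmetric] mult_ac)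
  then show ?thesis by (simp add: lin_mult_expand assms)
qed

lemma lin_comp: "lin \<phi> (lin \<psi> p) = lin (\<lambda>t. lin \<phi> (\<psi> t)) p"
  by (simp add: lin_def[of \<psi>] lin_sum lin_mconst_mult) (simp add: lin_def)

lemma pm_expand: "(p :: 'b \<Rightarrow>\<^sub>0 'c::comm_monoid_add) = (\<Sum>t\<in>Poly_Mapping.keys p. Poly_Mapping.single t (Poly_Mapping.lookup p t))"
  by (rule poly_mapping_eqI) (simp add: lookup_sum lookup_single when_def in_keys_iff)

definition monmap :: "(nat \<Rightarrow> nat) \<Rightarrow> (nat \<Rightarrow>\<^sub>0 nat) \<Rightarrow> (nat \<Rightarrow>\<^sub>0 nat)" where
  "monmap \<sigma> t = (\<Sum>i\<in>Poly_Mapping.keys t. Poly_Mapping.single (\<sigma> i) (Poly_Mapping.lookup t i))"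

lemma lookup_monmap:
  assumes "bij \<sigma>"
  shows "Poly_Mapping.lookup (monmap \<sigma> t) j = Poly_Mapping.lookup t (inv \<sigma> j)"
proof -
  have "Poly_Mapping.lookup (monmap \<sigma> t) j = (\<Sum>i\<in>Poly_Mapping.keys t. if i = inv \<sigma> j then Poly_Mapping.lookup t i else 0)"
    unfolding monmap_def lookup_sum
    by (rule sum.cong) (auto simp: lookup_single when_def bij_inv_eq_iff[OF assms])
  also have "\<dots> = Poly_Mapping.lookup t (inv \<sigma> j)"
    by (simp add: sum.delta in_keys_iff)
  finally show ?thesis .
qed

lemma monmap_add: "bij \<sigma> \<Longrightarrow> monmap \<sigma> (s + t) = monmap \<sigma> s + monmap \<sigma> t"
  by (rule poly_mapping_eqI) (simp add: lookup_monmap lookup_add)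

lemma monmap_zero[simp]: "monmap \<sigma> 0 = 0"
  by (simp add: monmap_def)

lemma monmap_single: "bij \<sigma> \<Longrightarrow> monmap \<sigma> (Poly_Mapping.single i a) = Poly_Mapping.single (\<sigma> i) a"
  by (rule poly_mapping_eqI) (auto simp: lookup_monmap lookup_single when_def bij_inv_eq_iff)

lemma monmap_comp: "bij \<sigma> \<Longrightarrow> bij \<tau> \<Longrightarrow> monmap \<sigma> (monmap \<tau> t) = monmap (\<sigma> \<circ> \<tau>) t"
  by (rule poly_mapping_eqI) (simp add: lookup_monmap bij_comp o_inv_distrib)

lemma monmap_fix:
  assumes "\<And>i. i \<in> Poly_Mapping.keys t \<Longrightarrow> \<sigma> i = i"
  shows "monmap \<sigma> t = t"
  unfolding monmap_def using assms by (subst (3) pm_expand) simp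

lemma monmap_id[simp]: "monmap id t = t"
  by (rule monmap_fix) simp

lemma keys_monmap:
  assumes "bij \<sigma>"
  shows "Poly_Mapping.keys (monmap \<sigma> t) = \<sigma> ` Poly_Mapping.keys t"
proof
  show "Poly_Mapping.keys (monmap \<sigma> t) \<subseteq> \<sigma> ` Poly_Mapping.keys t"
  proof
    fix x assume "x \<in> Poly_Mapping.keys (monmap \<sigma> t)"
    then have "inv \<sigma> x \<in> Poly_Mapping.keys t" by (simp add: in_keys_iff lookup_monmap assms)
    moreover have "x = \<sigma> (inv \<sigma> x)" using assms by (simp add: bij_is_surj surj_f_inv_f)
    ultimately show "x \<in> \<sigma> ` Poly_Mapping.keys t" by blast
  qed
  show "\<sigma> ` Poly_Mapping.keys t \<subseteq> Poly_Mapping.keys (monmap \<sigma> t)"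
  proof
    fix x assume "x \<in> \<sigma> ` Poly_Mapping.keys t"
    then obtain y where y: "y \<in> Poly_Mapping.keys t" "x = \<sigma> y" by blast
    then have "inv \<sigma> x = y" using assms by (simp add: bij_is_inj)
    then show "x \<in> Poly_Mapping.keys (monmap \<sigma> t)" using y by (simp add: in_keys_iff lookup_monmap assms)
  qed
qed

lemma monmap_inj: "bij \<sigma> \<Longrightarrow> monmap \<sigma> s = monmap \<sigma> t \<Longrightarrow> s = t"
  by (metis monmap_comp bij_imp_bij_inv inv_o_cancel bij_is_inj monmap_id)

lemma perm_lin: "perm_poly \<sigma> p = lin (\<lambda>t. mon (monmap \<sigma> t)) p"
  by (simp add: perm_poly_def lin_def monmap_def mconst_mon)

lemma perm_add: "perm_poly \<sigma> (p + q) = perm_poly \<sigma> p + perm_poly \<sigma> q"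
  by (simp add: perm_lin lin_add)

lemma perm_diff: "perm_poly \<sigma> (p - q) = perm_poly \<sigma> p - perm_poly \<sigma> q"
  by (simp add: perm_lin lin_diff)

lemma perm_uminus: "perm_poly \<sigma> (- p) = - perm_poly \<sigma> p"
  by (simp add: perm_lin lin_uminus)

lemma perm_zero[simp]: "perm_poly \<sigma> 0 = 0"
  by (simp add: perm_lin)

lemma perm_sum: "perm_poly \<sigma> (\<Sum>i\<in>I. f i) = (\<Sum>i\<in>I. perm_poly \<sigma> (f i))"
  by (simp add: perm_lin lin_sum)

lemma perm_mult: "bij \<sigma> \<Longrightarrow> perm_poly \<sigma> (p * q) = perm_poly \<sigma> p * perm_poly \<sigma> q"
  unfolding perm_lin by (rule lin_mult) (simp add: monmap_add mon_add)

lemma perm_mon: "perm_poly \<sigma> (mon t) = mon (monmap \<sigma> t)"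
  by (simp add: perm_lin lin_mon)

lemma perm_mconst_mult: "perm_poly \<sigma> (mconst c * p) = mconst c * perm_poly \<sigma> p"
  by (simp add: perm_lin lin_mconst_mult)

lemma perm_mconst[simp]: "perm_poly \<sigma> (mconst c) = mconst c"
proof -
  have "mconst c = mconst c * mon 0" by (simp add: mon_zero)
  also have "perm_poly \<sigma> \<dots> = mconst c * mon 0"
    by (simp only: perm_mconst_mult perm_mon monmap_zero)
  finally show ?thesis by (simp add: mon_zero)
qed

lemma perm_one[simp]: "perm_poly \<sigma> 1 = 1"
  using perm_mconst[of \<sigma> 1] by simp

lemma perm_Xv: "bij \<sigma> \<Longrightarrow> perm_poly \<sigma> (Xv i) = Xv (\<sigma> i)"
  by (simp add: Xv_def perm_mon monmap_single)

lemma perm_power: "bij \<sigma> \<Longrightarrow> perm_poly \<sigma> (p ^ k) = perm_poly \<sigma> p ^ k"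
  by (induction k) (simp_all add: perm_mult)

lemma perm_comp: "bij \<sigma> \<Longrightarrow> bij \<tau> \<Longrightarrow> perm_poly \<sigma> (perm_poly \<tau> p) = perm_poly (\<sigma> \<circ> \<tau>) p"
  unfolding perm_lin[of \<tau>] by (simp add: lin_comp lin_mon monmap_comp perm_lin)

lemma perm_id[simp]: "perm_poly id p = p"
  by (simp add: perm_lin lin_id)

lemma perm_fix:
  assumes "\<And>t i. t \<in> Poly_Mapping.keys p \<Longrightarrow> i \<in> Poly_Mapping.keys t \<Longrightarrow> \<sigma> i = i"
  shows "perm_poly \<sigma> p = p"
proof -
  have "perm_poly \<sigma> p = lin mon p"
    unfolding perm_lin by (rule lin_cong) (simp add: monmap_fix assms)
  then show ?thesis by (simp add: lin_id)
qed

lemma lookup_perm: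
  assumes "bij \<sigma>"
  shows "Poly_Mapping.lookup (perm_poly \<sigma> p) (monmap \<sigma> t) = Poly_Mapping.lookup p t"
proof -
  have "Poly_Mapping.lookup (perm_poly \<sigma> p) (monmap \<sigma> t) =
     (\<Sum>s\<in>Poly_Mapping.keys p. if s = t then Poly_Mapping.lookup p s else 0)"
    unfolding perm_poly_def monmap_def[symmetric] lookup_sum
    apply (rule sum.cong, simp)
    using monmap_inj[OF assms] by (auto simp: lookup_single when_def)
  also have "\<dots> = Poly_Mapping.lookup p t" by (simp add: sum.delta in_keys_iff)
  finally show ?thesis .
qed

lemma keys_lin: "Poly_Mapping.keys (lin \<phi> p) \<subseteq> (\<Union>t\<in>Poly_Mapping.keys p. Poly_Mapping.keys (\<phi> t))"
  unfolding lin_def by (rule order.trans[OF keys_sum]) (use keys_mconst_mult in blast)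

lemma keys_mult_sub: "u \<in> Poly_Mapping.keys (p * q) \<Longrightarrow> \<exists>a\<in>Poly_Mapping.keys p. \<exists>b\<in>Poly_Mapping.keys q. u = a + b"
  using keys_mult by blast

lemma keys_add_nat: "Poly_Mapping.keys ((a::nat \<Rightarrow>\<^sub>0 nat) + b) = Poly_Mapping.keys a \<union> Poly_Mapping.keys b"
  by (auto simp: in_keys_iff lookup_add)

lemma in_KX_add: "in_KX n p \<Longrightarrow> in_KX n q \<Longrightarrow> in_KX n (p + q)"
  unfolding in_KX_def by (auto dest!: subsetD[OF keys_add])

lemma in_KX_uminus: "in_KX n (p::'a::comm_ring_1 mpoly) \<Longrightarrow> in_KX n (- p)"
  unfolding in_KX_def by (simp add: keys_minus)

lemma in_KX_diff: "in_KX n (p::'a::comm_ring_1 mpoly) \<Longrightarrow> in_KX n q \<Longrightarrow> in_KX n (p - q)"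
  unfolding diff_conv_add_uminus by (intro in_KX_add in_KX_uminus)

lemma in_KX_zero[simp]: "in_KX n 0"
  by (simp add: in_KX_def)

lemma in_KX_mult:
  assumes "in_KX n p" "in_KX n (q::'a::comm_ring_1 mpoly)" shows "in_KX n (p * q)"
  unfolding in_KX_def
proof
  fix u assume "u \<in> Poly_Mapping.keys (p * q)"
  then obtain a b where "a \<in> Poly_Mapping.keys p" "b \<in> Poly_Mapping.keys q" "u = a + b"
    using keys_mult_sub by blast
  then show "Poly_Mapping.keys u \<subseteq> {1..n}" using assms by (auto simp: in_KX_def keys_add_nat)
qed

lemma in_KX_sum: "(\<And>i. i \<in> I \<Longrightarrow> in_KX n (f i)) \<Longrightarrow> in_KX n (\<Sum>i\<in>I. f i)"
  by (induction I rule: infinite_finite_induct) (auto intro: in_KX_add)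

lemma in_KX_mconst[simp]: "in_KX n (mconst c)"
  by (simp add: in_KX_def mconst_def)

lemma in_KX_one[simp]: "in_KX n 1"
  by (simp add: in_KX_def)

lemma in_KX_mon: "Poly_Mapping.keys t \<subseteq> {1..n} \<Longrightarrow> in_KX n (Poly_Mapping.single t c)"
  by (simp add: in_KX_def)

lemma in_KX_Xv: "i \<in> {1..n} \<Longrightarrow> in_KX n (Xv i)"
  by (simp add: Xv_def in_KX_def)

lemma in_KX_power: "in_KX n (p::'a::comm_ring_1 mpoly) \<Longrightarrow> in_KX n (p ^ k)"
  by (induction k) (auto intro: in_KX_mult)

lemma in_KX_mconst_mult: "in_KX n (p::'a::comm_ring_1 mpoly) \<Longrightarrow> in_KX n (mconst c * p)"
  by (simp add: in_KX_mult)

lemma in_KX_lin: "(\<And>t. t \<in> Poly_Mapping.keys p \<Longrightarrow> in_KX n (\<phi> t)) \<Longrightarrow> in_KX n (lin \<phi> p)"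
  unfolding lin_def by (auto intro!: in_KX_sum in_KX_mconst_mult)

lemma in_KX_perm:
  assumes "\<sigma> permutes {1..n}" "in_KX n p"
  shows "in_KX n (perm_poly \<sigma> p)"
  unfolding perm_lin
proof (rule in_KX_lin)
  fix t assume "t \<in> Poly_Mapping.keys p"
  then have "Poly_Mapping.keys t \<subseteq> {1..n}" using assms(2) by (auto simp: in_KX_def)
  then show "in_KX n (mon (monmap \<sigma> t))"
  proof (intro in_KX_mon)
    have "Poly_Mapping.keys (monmap \<sigma> t) = \<sigma> ` Poly_Mapping.keys t"
      using assms(1) by (simp add: keys_monmap permutes_bij)
    also have "\<dots> \<subseteq> \<sigma> ` {1..n}" using \<open>Poly_Mapping.keys t \<subseteq> {1..n}\<close> by blast
    also have "\<dots> = {1..n}" using assms(1) by (simp add: permutes_image)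
    finally show "Poly_Mapping.keys (monmap \<sigma> t) \<subseteq> {1..n}" .
  qed
qed

definition Sset :: "nat \<Rightarrow> nat \<Rightarrow> (nat \<Rightarrow>\<^sub>0 nat) set" where
  "Sset i m = {t. Poly_Mapping.keys t \<subseteq> {1..i} \<and> (\<Sum>k\<in>{1..i}. Poly_Mapping.lookup t k) = m}"

lemma finite_Sset: "finite (Sset i m)"
proof -
  let ?F = "{f. \<forall>x. (x \<in> {1..i} \<longrightarrow> f x \<in> {0..m}) \<and> (x \<notin> {1..i} \<longrightarrow> f x = (0::nat))}"
  have "finite ?F" by (rule finite_set_of_finite_funs) auto
  moreover have "Poly_Mapping.lookup ` Sset i m \<subseteq> ?F"
  proof
    fix f assume "f \<in> Poly_Mapping.lookup ` Sset i m"
    then obtain t where t: "t \<in> Sset i m" "f = Poly_Mapping.lookup t" by blast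
    have "Poly_Mapping.lookup t x \<le> m" if "x \<in> {1..i}" for x
    proof -
      have "Poly_Mapping.lookup t x \<le> (\<Sum>k\<in>{1..i}. Poly_Mapping.lookup t k)"
        by (rule member_le_sum) (use that in auto)
      then show ?thesis using t(1) unfolding Sset_def by simp
    qed
    moreover have "Poly_Mapping.lookup t x = 0" if "x \<notin> {1..i}" for x
      using t(1) that unfolding Sset_def by (auto simp: in_keys_iff)
    ultimately show "f \<in> ?F" unfolding t(2) by simp
  qed
  ultimately have fin: "finite (Poly_Mapping.lookup ` Sset i m)" by (rule finite_subset[rotated])
  have "inj Poly_Mapping.lookup" by (rule injI, rule poly_mapping_eqI) simp
  then have "inj_on Poly_Mapping.lookup (Sset i m)" by (rule inj_on_subset) simp
  with fin show ?thesis by (rule finite_imageD)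
qed

lemma hcomp_Sset: "hcomp i m = (\<Sum>t\<in>Sset i m. mon t)"
  unfolding hcomp_def Sset_def by (rule refl)

lemma lookup_hcomp: "Poly_Mapping.lookup (hcomp i m) t = (if t \<in> Sset i m then 1 else 0)"
  unfolding hcomp_Sset lookup_sum lookup_single when_def by (simp add: finite_Sset)

lemma keys_hcomp: "Poly_Mapping.keys (hcomp i m :: 'a::comm_ring_1 mpoly) \<subseteq> Sset i m"
proof
  fix t assume "t \<in> Poly_Mapping.keys (hcomp i m :: 'a mpoly)"
  then have "Poly_Mapping.lookup (hcomp i m :: 'a mpoly) t \<noteq> 0" by (simp add: in_keys_iff)
  then show "t \<in> Sset i m" unfolding lookup_hcomp by (simp split: if_splits)
qed

lemma sum_Suc_split: "(\<Sum>k\<in>{1..Suc i}. f k) = (\<Sum>k\<in>{1..i}. f k) + (f (Suc i) :: nat)"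
  by simp

lemma Sset_Suc:
  "Sset (Suc i) (Suc m) = Sset i (Suc m) \<union> (\<lambda>t. t + Poly_Mapping.single (Suc i) 1) ` Sset (Suc i) m"
  (is "?L = ?A \<union> ?B")
proof
  show "?L \<subseteq> ?A \<union> ?B"
  proof
    fix t assume t: "t \<in> ?L"
    show "t \<in> ?A \<union> ?B"
    proof (cases "Poly_Mapping.lookup t (Suc i) = 0")
      case True
      have "Poly_Mapping.keys t \<subseteq> {1..i}"
      proof
        fix x assume x: "x \<in> Poly_Mapping.keys t"
        then have "x \<in> {1..Suc i}" using t unfolding Sset_def by blast
        moreover have "x \<noteq> Suc i" using x True by (auto simp: in_keys_iff)
        ultimately show "x \<in> {1..i}" by auto
      qed
      then show ?thesis using t True unfolding Sset_def by auto
    next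
      case False
      let ?e = "Poly_Mapping.single (Suc i) (1::nat)"
      define t' where "t' = t - ?e"
      have lk: "Poly_Mapping.lookup t' k = Poly_Mapping.lookup t k - (if k = Suc i then 1 else 0)" for k
        by (simp add: t'_def lookup_minus lookup_single when_def)
      have tt: "t = t' + ?e"
        by (rule poly_mapping_eqI) (use False in \<open>simp add: lk lookup_add lookup_single when_def\<close>)
      have "Poly_Mapping.keys t' \<subseteq> Poly_Mapping.keys t"
        by (auto simp: in_keys_iff lk split: if_splits)
      moreover have "(\<Sum>k\<in>{1..Suc i}. Poly_Mapping.lookup t' k) = m"
      proof -
        have "(\<Sum>k\<in>{1..i}. Poly_Mapping.lookup t' k) = (\<Sum>k\<in>{1..i}. Poly_Mapping.lookup t k)"
          by (rule sum.cong) (auto simp: lk)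
        then show ?thesis using t False unfolding Sset_def by (simp add: lk)
      qed
      ultimately have "t' \<in> Sset (Suc i) m" using t unfolding Sset_def by auto
      then show ?thesis using tt by blast
    qed
  qed
  show "?A \<union> ?B \<subseteq> ?L"
  proof
    fix t assume "t \<in> ?A \<union> ?B"
    then show "t \<in> ?L"
    proof
      assume t: "t \<in> ?A"
      then have "Poly_Mapping.lookup t (Suc i) = 0" unfolding Sset_def by (auto simp: in_keys_iff)
      then show ?thesis using t unfolding Sset_def by auto
    next
      assume "t \<in> ?B"
      then obtain s where s: "s \<in> Sset (Suc i) m" "t = s + Poly_Mapping.single (Suc i) 1" by blast
      have "(\<Sum>k\<in>{1..i}. Poly_Mapping.lookup t k) = (\<Sum>k\<in>{1..i}. Poly_Mapping.lookup s k)"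
        by (rule sum.cong) (auto simp: s(2) lookup_add lookup_single)
      then show ?thesis using s unfolding Sset_def by (auto simp: keys_add_nat lookup_add)
    qed
  qed
qed

lemma hcomp_rec: "hcomp (Suc i) (Suc m) = hcomp i (Suc m) + Xv (Suc i) * (hcomp (Suc i) m :: 'a::comm_ring_1 mpoly)"
proof -
  let ?e = "Poly_Mapping.single (Suc i) (1::nat)"
  have disj: "Sset i (Suc m) \<inter> (\<lambda>t. t + ?e) ` Sset (Suc i) m = {}"
  proof -
    have "Poly_Mapping.lookup t (Suc i) = 0" if "t \<in> Sset i (Suc m)" for t
      using that unfolding Sset_def by (auto simp: in_keys_iff)
    moreover have "Poly_Mapping.lookup t (Suc i) \<noteq> 0" if "t \<in> (\<lambda>t. t + ?e) ` Sset (Suc i) m" for t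
      using that by (auto simp: lookup_add)
    ultimately show ?thesis by blast
  qed
  have inj: "inj_on (\<lambda>t. t + ?e) (Sset (Suc i) m)"
    by (rule inj_onI) simp
  have "hcomp (Suc i) (Suc m) = (\<Sum>t\<in>Sset i (Suc m). mon t) + (\<Sum>t\<in>(\<lambda>t. t + ?e) ` Sset (Suc i) m. (mon t :: 'a mpoly))"
    unfolding hcomp_Sset Sset_Suc by (rule sum.union_disjoint[OF finite_Sset finite_imageI[OF finite_Sset] disj])
  also have "(\<Sum>t\<in>(\<lambda>t. t + ?e) ` Sset (Suc i) m. (mon t :: 'a mpoly)) = (\<Sum>t\<in>Sset (Suc i) m. mon (t + ?e))"
    by (rule sum.reindex[OF inj, unfolded comp_def])
  also have "\<dots> = Xv (Suc i) * hcomp (Suc i) m"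
    by (simp add: hcomp_Sset sum_distrib_left mon_add Xv_def mult.commute)
  finally show ?thesis by (simp add: hcomp_Sset)
qed

lemma hcomp_zero: "hcomp i 0 = 1"
proof -
  have "t = 0" if t: "t \<in> Sset i 0" for t
  proof (rule poly_mapping_eqI)
    fix x
    show "Poly_Mapping.lookup t x = Poly_Mapping.lookup 0 x"
    proof (cases "x \<in> {1..i}")
      case True
      then show ?thesis using t unfolding Sset_def by simp
    next
      case False
      then show ?thesis using t unfolding Sset_def by (auto simp: in_keys_iff)
    qed
  qed
  moreover have "0 \<in> Sset i 0" by (simp add: Sset_def)
  ultimately have "Sset i 0 = {0}" by blast
  then show ?thesis by (simp add: hcomp_Sset mon_zero)
qed

lemma Sset_monmap:
  assumes "\<sigma> permutes {1..i}" "t \<in> Sset i m"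
  shows "monmap \<sigma> t \<in> Sset i m"
proof -
  have b: "bij \<sigma>" using assms(1) by (rule permutes_bij)
  have "Poly_Mapping.keys (monmap \<sigma> t) = \<sigma> ` Poly_Mapping.keys t" by (simp add: keys_monmap b)
  also have "\<dots> \<subseteq> \<sigma> ` {1..i}" using assms(2) unfolding Sset_def by blast
  also have "\<dots> = {1..i}" using assms(1) by (simp add: permutes_image)
  finally have k: "Poly_Mapping.keys (monmap \<sigma> t) \<subseteq> {1..i}" .
  have "(\<Sum>k\<in>{1..i}. Poly_Mapping.lookup (monmap \<sigma> t) k) = (\<Sum>k\<in>{1..i}. Poly_Mapping.lookup t (inv \<sigma> k))"
    by (simp add: lookup_monmap b)
  also have "\<dots> = (\<Sum>k\<in>{1..i}. Poly_Mapping.lookup t k)"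
    using sum.permute[OF permutes_inv[OF assms(1)], of "Poly_Mapping.lookup t"] by (simp add: comp_def)
  finally show ?thesis using k assms(2) unfolding Sset_def by auto
qed

lemma hcomp_perm:
  assumes "\<sigma> permutes {1..i}"
  shows "perm_poly \<sigma> (hcomp i m) = (hcomp i m :: 'a::comm_ring_1 mpoly)"
proof -
  have b: "bij \<sigma>" using assms by (rule permutes_bij)
  have inj: "inj_on (monmap \<sigma>) (Sset i m)" by (meson inj_onI monmap_inj b)
  have img: "monmap \<sigma> ` Sset i m = Sset i m"
  proof
    show "monmap \<sigma> ` Sset i m \<subseteq> Sset i m" using Sset_monmap[OF assms] by blast
    show "Sset i m \<subseteq> monmap \<sigma> ` Sset i m"
    proof
      fix t assume t: "t \<in> Sset i m"
      have bi: "bij (inv \<sigma>)" using b by (simp add: bij_imp_bij_inv)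
      have "\<sigma> \<circ> inv \<sigma> = id" using b by (meson bij_is_surj surj_iff)
      then have "monmap \<sigma> (monmap (inv \<sigma>) t) = t"
        using b bi by (simp add: monmap_comp)
      moreover have "monmap (inv \<sigma>) t \<in> Sset i m"
        using Sset_monmap[OF permutes_inv[OF assms] t] .
      ultimately show "t \<in> monmap \<sigma> ` Sset i m" by (metis image_eqI)
    qed
  qed
  have "perm_poly \<sigma> (hcomp i m) = (\<Sum>t\<in>Sset i m. (mon (monmap \<sigma> t) :: 'a mpoly))"
    by (simp add: hcomp_Sset perm_sum perm_mon)
  also have "\<dots> = (\<Sum>t\<in>monmap \<sigma> ` Sset i m. mon t)"
    by (rule sum.reindex[OF inj, unfolded comp_def, symmetric])
  finally show ?thesis by (simp add: img hcomp_Sset)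
qed

lemma fpoly_monic: "degree (fpoly A) = size A \<and> coeff (fpoly A) (size A) = (1::'a::field)"
proof (induction A)
  case empty
  then show ?case by (simp add: fpoly_def)
next
  case (add a A)
  have e: "fpoly (add_mset a A) = [:-a, 1:] * fpoly A" by (simp add: fpoly_def)
  have l: "lead_coeff (fpoly A) = 1" using add.IH by metis
  have nz: "fpoly A \<noteq> 0" using l by auto
  have dg: "degree (fpoly (add_mset a A)) = 1 + degree (fpoly A)"
    unfolding e by (subst degree_mult_eq) (use nz in auto)
  have "lead_coeff (fpoly (add_mset a A)) = lead_coeff [:-a, 1:] * lead_coeff (fpoly A)"
    unfolding e by (rule lead_coeff_mult)
  also have "\<dots> = 1" using l by simp
  finally have "lead_coeff (fpoly (add_mset a A)) = 1" .
  moreover have "degree (fpoly (add_mset a A)) = size (add_mset a A)" using dg add.IH by simp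
  ultimately show ?case by metis
qed

lemma fpoly_top: "coeff (fpoly A) (size A) = (1::'a::field)"
  using fpoly_monic[of A] by blast

definition Rset :: "nat \<Rightarrow> nat \<Rightarrow> (nat \<Rightarrow>\<^sub>0 nat) set" where
  "Rset i D = {t. Poly_Mapping.keys t \<subseteq> {1..i} \<and> Poly_Mapping.lookup t i < D}"

lemma Sset_lookup_le: "t \<in> Sset i m \<Longrightarrow> j \<in> {1..i} \<Longrightarrow> Poly_Mapping.lookup t j \<le> m"
  unfolding Sset_def by (metis (mono_tags, lifting) finite_atLeastAtMost member_le_sum mem_Collect_eq zero_le)

lemma Sset_top:
  assumes "t \<in> Sset i m" "1 \<le> i" "Poly_Mapping.lookup t i = m"
  shows "t = Poly_Mapping.single i m"
proof (rule poly_mapping_eqI)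
  fix j
  have s: "(\<Sum>k\<in>{1..i}. Poly_Mapping.lookup t k) = m" using assms(1) by (simp add: Sset_def)
  have "(\<Sum>k\<in>{1..i}. Poly_Mapping.lookup t k) = Poly_Mapping.lookup t i + (\<Sum>k\<in>{1..i}-{i}. Poly_Mapping.lookup t k)"
    using assms(2) by (subst sum.remove[of _ i]) auto
  then have z: "(\<Sum>k\<in>{1..i}-{i}. Poly_Mapping.lookup t k) = 0" using s assms(3) by simp
  show "Poly_Mapping.lookup t j = Poly_Mapping.lookup (Poly_Mapping.single i m) j"
  proof (cases "j = i")
    case True then show ?thesis using assms(3) by simp
  next
    case False
    show ?thesis
    proof (cases "j \<in> {1..i}")
      case True
      then have "j \<in> {1..i} - {i}" using False by simp
      then have "Poly_Mapping.lookup t j = 0" using z by simp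
      then show ?thesis using False by (simp add: lookup_single)
    next
      case False
      then have "j \<notin> Poly_Mapping.keys t" using assms(1) unfolding Sset_def by blast
      then show ?thesis using \<open>j \<noteq> i\<close> by (simp add: in_keys_iff lookup_single)
    qed
  qed
qed

context
  fixes A :: "'a::field multiset" and d :: nat
  assumes dA: "size A = d"
begin

abbreviation "fc k \<equiv> coeff (fpoly A) k"

definition grest :: "nat \<Rightarrow> 'a mpoly" where
  "grest i = (\<Sum>k\<in>{i-1..<d}. mconst (fc k) * hcomp i (k - (i - 1))) +
             (\<Sum>t\<in>Sset i (d - i + 1) - {Poly_Mapping.single i (d - i + 1)}. mon t)"

lemma gpoly_split:
  assumes "1 \<le> i" "i \<le> d"
  shows "gpoly A i = Xv i ^ (d - i + 1) + grest i"
proof -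
  have top: "Poly_Mapping.single i (d - i + 1) \<in> Sset i (d - i + 1)"
    using assms by (simp add: Sset_def lookup_single when_def)
  have "{i-1..d} = insert d {i-1..<d}" using assms by auto
  then have "gpoly A i = mconst (fc d) * hcomp i (d - (i - 1)) + (\<Sum>k\<in>{i-1..<d}. mconst (fc k) * hcomp i (k - (i - 1)))"
    by (simp add: gpoly_def dA)
  also have "mconst (fc d) * hcomp i (d - (i - 1)) = (hcomp i (d - i + 1) :: 'a mpoly)"
    using fpoly_top[of A] dA assms by (simp add: Suc_diff_le)
  also have "hcomp i (d - i + 1) = mon (Poly_Mapping.single i (d - i + 1)) +
      (\<Sum>t\<in>Sset i (d - i + 1) - {Poly_Mapping.single i (d - i + 1)}. (mon t :: 'a mpoly))"
    unfolding hcomp_Sset using top by (simp add: sum.remove finite_Sset)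
  finally show ?thesis unfolding grest_def Xv_power by (simp add: add_ac)
qed

lemma keys_grest:
  assumes "1 \<le> i" "i \<le> d"
  shows "Poly_Mapping.keys (grest i) \<subseteq> Rset i (d - i + 1)"
proof -
  have f1: "Poly_Mapping.keys (mconst (fc k) * hcomp i (k - (i - 1)) :: 'a mpoly) \<subseteq> Rset i (d - i + 1)"
    if "k \<in> {i-1..<d}" for k
  proof -
    have "Poly_Mapping.keys (mconst (fc k) * hcomp i (k - (i - 1)) :: 'a mpoly) \<subseteq> Sset i (k - (i - 1))"
      using keys_mconst_mult keys_hcomp by blast
    also have "\<dots> \<subseteq> Rset i (d - i + 1)"
    proof
      fix t assume "t \<in> Sset i (k - (i - 1))"
      moreover have "Poly_Mapping.lookup t i \<le> k - (i - 1)"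
        using Sset_lookup_le[OF \<open>t \<in> Sset i (k - (i - 1))\<close>] assms by simp
      ultimately show "t \<in> Rset i (d - i + 1)" using that unfolding Sset_def Rset_def by auto
    qed
    finally show ?thesis .
  qed
  have s1: "Poly_Mapping.keys (\<Sum>k\<in>{i-1..<d}. mconst (fc k) * hcomp i (k - (i - 1)) :: 'a mpoly) \<subseteq> Rset i (d - i + 1)"
    by (rule order.trans[OF keys_sum]) (use f1 in blast)
  have s2: "Poly_Mapping.keys (\<Sum>t\<in>Sset i (d - i + 1) - {Poly_Mapping.single i (d - i + 1)}. (mon t :: 'a mpoly)) \<subseteq> Rset i (d - i + 1)"
  proof (rule order.trans[OF keys_sum], rule UN_least)
    fix t assume t: "t \<in> Sset i (d - i + 1) - {Poly_Mapping.single i (d - i + 1)}"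
    then have "Poly_Mapping.lookup t i \<le> d - i + 1" using Sset_lookup_le assms by auto
    moreover have "Poly_Mapping.lookup t i \<noteq> d - i + 1" using Sset_top[of t i] t assms by auto
    ultimately show "Poly_Mapping.keys (mon t :: 'a mpoly) \<subseteq> Rset i (d - i + 1)"
      using t unfolding Rset_def Sset_def by auto
  qed
  show ?thesis unfolding grest_def
    by (rule order.trans[OF keys_add]) (use s1 s2 in blast)
qed

lemma lookup_gpoly_top:
  assumes "1 \<le> i" "i \<le> d"
  shows "Poly_Mapping.lookup (gpoly A i) (Poly_Mapping.single i (d - i + 1)) = 1"
proof -
  have "Poly_Mapping.single i (d - i + 1) \<notin> Rset i (d - i + 1)" by (simp add: Rset_def)
  then have "Poly_Mapping.lookup (grest i) (Poly_Mapping.single i (d - i + 1)) = 0"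
    using keys_grest[OF assms] by (auto simp: in_keys_iff)
  then show ?thesis unfolding gpoly_split[OF assms] Xv_power lookup_add by simp
qed

lemma keys_gpoly:
  assumes "1 \<le> i" "i \<le> d"
  shows "Poly_Mapping.keys (gpoly A i) \<subseteq> insert (Poly_Mapping.single i (d - i + 1)) (Rset i (d - i + 1))"
  unfolding gpoly_split[OF assms] Xv_power
  using keys_add keys_grest[OF assms] by fastforce

lemma keys_gpoly_sub:
  assumes "1 \<le> i" "i \<le> d" "t \<in> Poly_Mapping.keys (gpoly A i)"
  shows "Poly_Mapping.keys t \<subseteq> {1..i}"
proof -
  have "t = Poly_Mapping.single i (d - i + 1) \<or> t \<in> Rset i (d - i + 1)"
    using keys_gpoly[OF assms(1,2)] assms(3) by blast
  then show ?thesis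
  proof
    assume "t = Poly_Mapping.single i (d - i + 1)"
    then show ?thesis using assms(1) by simp
  qed (simp add: Rset_def)
qed

lemma in_KX_gpoly:
  assumes "1 \<le> i" "i \<le> d" "i \<le> n"
  shows "in_KX n (gpoly A i)"
  unfolding in_KX_def using keys_gpoly_sub[OF assms(1,2)] assms(3) by fastforce

lemma gpoly_perm_sym:
  assumes "\<sigma> permutes {1..i}"
  shows "perm_poly \<sigma> (gpoly A i) = gpoly A i"
  by (simp add: gpoly_def perm_sum perm_mconst_mult hcomp_perm[OF assms])

lemma gpoly_perm_fix:
  assumes "1 \<le> i" "i \<le> d" "\<And>j. j \<in> {1..i} \<Longrightarrow> \<sigma> j = j"
  shows "perm_poly \<sigma> (gpoly A i) = gpoly A i"
  by (rule perm_fix) (use keys_gpoly_sub[OF assms(1,2)] assms(3) in blast)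

lemma hcomp_diff:
  assumes "1 \<le> k"
  shows "hcomp k (Suc m) - perm_poly (transpose k (Suc k)) (hcomp k (Suc m)) =
         (Xv k - Xv (Suc k)) * (hcomp (Suc k) m :: 'b::comm_ring_1 mpoly)"
proof -
  let ?s = "transpose k (Suc k)"
  have p: "?s permutes {1..Suc k}" using assms by (intro permutes_swap_id) auto
  have b: "bij ?s" by simp
  have r: "hcomp (Suc k) (Suc m) = hcomp k (Suc m) + Xv (Suc k) * (hcomp (Suc k) m :: 'b mpoly)"
    by (rule hcomp_rec)
  then have "perm_poly ?s (hcomp (Suc k) (Suc m)) = perm_poly ?s (hcomp k (Suc m)) + Xv k * (hcomp (Suc k) m :: 'b mpoly)"
    by (simp add: perm_add perm_mult b perm_Xv hcomp_perm[OF p])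
  then have "hcomp (Suc k) (Suc m) = perm_poly ?s (hcomp k (Suc m)) + Xv k * (hcomp (Suc k) m :: 'b mpoly)"
    by (simp add: hcomp_perm[OF p])
  with r show ?thesis by (simp add: algebra_simps)
qed

lemma gpoly_diff:
  assumes "1 \<le> k" "k < d"
  shows "gpoly A k - perm_poly (transpose k (Suc k)) (gpoly A k) = (Xv k - Xv (Suc k)) * gpoly A (Suc k)"
proof -
  let ?s = "transpose k (Suc k)"
  have "{k-1..d} = insert (k-1) {k..d}" using assms by auto
  then have "gpoly A k = (\<Sum>j\<in>insert (k-1) {k..d}. mconst (fc j) * hcomp k (j - (k - 1)))"
    by (simp add: gpoly_def dA)
  also have "\<dots> = mconst (fc (k-1)) * hcomp k 0 + (\<Sum>j\<in>{k..d}. mconst (fc j) * hcomp k (j - (k - 1)))"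
    using assms by (subst sum.insert) auto
  finally have g: "gpoly A k = mconst (fc (k-1)) * hcomp k 0 + (\<Sum>j\<in>{k..d}. mconst (fc j) * hcomp k (j - (k - 1)))" .
  have "gpoly A k - perm_poly ?s (gpoly A k) = (\<Sum>j\<in>{k..d}. mconst (fc j) * (hcomp k (Suc (j - k)) - perm_poly ?s (hcomp k (Suc (j - k)))))"
    unfolding g using assms
    by (simp add: perm_add perm_sum perm_mconst_mult hcomp_zero right_diff_distrib sum_subtractf Suc_diff_le)
  also have "\<dots> = (\<Sum>j\<in>{k..d}. mconst (fc j) * ((Xv k - Xv (Suc k)) * hcomp (Suc k) (j - k)))"
    by (simp add: hcomp_diff[OF assms(1)])
  also have "\<dots> = (Xv k - Xv (Suc k)) * gpoly A (Suc k)"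
    by (simp add: gpoly_def dA sum_distrib_left mult_ac)
  finally show ?thesis .
qed

end

abbreviation sk :: "nat \<Rightarrow> nat \<Rightarrow> nat" where "sk k \<equiv> transpose k (Suc k)"

definition ddmon :: "nat \<Rightarrow> (nat \<Rightarrow>\<^sub>0 nat) \<Rightarrow> 'a::comm_ring_1 mpoly" where
  "ddmon k t = (let a = Poly_Mapping.lookup t k; b = Poly_Mapping.lookup t (Suc k);
      u = t - Poly_Mapping.single k a - Poly_Mapping.single (Suc k) b; c = min a b; m = max a b - c in
     (if b \<le> a then 1 else -1) * (\<Sum>i<m. mon (u + Poly_Mapping.single k (c + i) + Poly_Mapping.single (Suc k) (c + (m - Suc i)))))"

definition dd :: "nat \<Rightarrow> 'a::comm_ring_1 mpoly \<Rightarrow> 'a mpoly" where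
  "dd k p = lin (ddmon k) p"

lemma mon3: "mon (u + Poly_Mapping.single k e1 + Poly_Mapping.single l e2) = mon u * Xv k ^ e1 * (Xv l ^ e2 :: 'a::comm_ring_1 mpoly)"
  by (simp add: mon_add Xv_power)

lemma ddmon_eq:
  "(Xv k - Xv (Suc k)) * ddmon k t = mon t - (mon (monmap (sk k) t) :: 'a::comm_ring_1 mpoly)"
proof -
  define a where "a = Poly_Mapping.lookup t k"
  define b where "b = Poly_Mapping.lookup t (Suc k)"
  define u where "u = t - Poly_Mapping.single k a - Poly_Mapping.single (Suc k) b"
  define c where "c = min a b"
  define m where "m = max a b - c"
  let ?X = "Xv k :: 'a mpoly" and ?Y = "Xv (Suc k) :: 'a mpoly"
  have lu: "Poly_Mapping.lookup u j = (if j = k \<or> j = Suc k then 0 else Poly_Mapping.lookup t j)" for j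
    by (auto simp: u_def lookup_minus lookup_single a_def b_def)
  have t_eq: "t = u + Poly_Mapping.single k a + Poly_Mapping.single (Suc k) b"
    by (rule poly_mapping_eqI) (auto simp: lookup_add lu lookup_single a_def b_def)
  have st_eq: "monmap (sk k) t = u + Poly_Mapping.single k b + Poly_Mapping.single (Suc k) a"
    by (rule poly_mapping_eqI) (auto simp: lookup_monmap lookup_add lu lookup_single a_def b_def transpose_def)
  have S: "(\<Sum>i<m. mon (u + Poly_Mapping.single k (c + i) + Poly_Mapping.single (Suc k) (c + (m - Suc i))))
      = mon u * (?X * ?Y) ^ c * (\<Sum>i<m. ?Y ^ (m - Suc i) * ?X ^ i)"
    unfolding mon3 power_add by (simp add: sum_distrib_left power_mult_distrib mult_ac)
  have key: "(?X - ?Y) * (\<Sum>i<m. mon (u + Poly_Mapping.single k (c + i) + Poly_Mapping.single (Suc k) (c + (m - Suc i))))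
      = mon u * (?X * ?Y) ^ c * (?X ^ m - ?Y ^ m)"
    unfolding S power_diff_sumr2[of ?X m ?Y] by (simp add: mult_ac)
  have dm: "ddmon k t = (if b \<le> a then 1 else -1) * (\<Sum>i<m. mon (u + Poly_Mapping.single k (c + i) + Poly_Mapping.single (Suc k) (c + (m - Suc i))))"
    unfolding ddmon_def Let_def a_def b_def u_def c_def m_def by simp
  have mt: "mon t = mon u * ?X ^ a * ?Y ^ b" by (subst t_eq) (rule mon3)
  have ms: "mon (monmap (sk k) t) = mon u * ?X ^ b * ?Y ^ a" by (simp only: st_eq mon3)
  let ?S = "\<Sum>i<m. mon (u + Poly_Mapping.single k (c + i) + Poly_Mapping.single (Suc k) (c + (m - Suc i))) :: 'a mpoly"
  show ?thesis
  proof (cases "b \<le> a")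
    case True
    then have "c = b" "m = a - b" by (auto simp: c_def m_def)
    moreover have "?X ^ a = ?X ^ b * ?X ^ (a - b)" "?Y ^ a = ?Y ^ b * ?Y ^ (a - b)"
      using True by (metis le_add_diff_inverse power_add)+
    ultimately have "mon u * (?X * ?Y) ^ c * (?X ^ m - ?Y ^ m) = mon u * ?X ^ a * ?Y ^ b - mon u * ?X ^ b * ?Y ^ a"
      by (simp add: power_mult_distrib algebra_simps)
    moreover have "(?X - ?Y) * ddmon k t = (?X - ?Y) * ?S" unfolding dm using True by simp
    ultimately show ?thesis unfolding key mt ms by simp
  next
    case False
    then have "c = a" "m = b - a" by (auto simp: c_def m_def)
    moreover have "?X ^ b = ?X ^ a * ?X ^ (b - a)" "?Y ^ b = ?Y ^ a * ?Y ^ (b - a)"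
      using False by (metis le_add_diff_inverse nat_le_linear power_add)+
    ultimately have "mon u * (?X * ?Y) ^ c * (?X ^ m - ?Y ^ m) = mon u * ?X ^ b * ?Y ^ a - mon u * ?X ^ a * ?Y ^ b"
      by (simp add: power_mult_distrib algebra_simps)
    moreover have "(?X - ?Y) * ddmon k t = - ((?X - ?Y) * ?S)" unfolding dm using False by simp
    ultimately show ?thesis unfolding key mt ms by simp
  qed
qed


lemma dd_eq: "(Xv k - Xv (Suc k)) * dd k p = p - perm_poly (sk k) (p :: 'a::comm_ring_1 mpoly)"
proof -
  have "(Xv k - Xv (Suc k)) * dd k p = lin (\<lambda>t. (Xv k - Xv (Suc k)) * ddmon k t) p"
    by (simp add: dd_def lin_fun_mult_left)
  also have "\<dots> = lin (\<lambda>t. mon t - mon (monmap (sk k) t)) p"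
    by (simp add: ddmon_eq)
  also have "\<dots> = p - perm_poly (sk k) p"
    by (simp add: lin_fun_diff lin_id perm_lin)
  finally show ?thesis .
qed

lemma dd_add: "dd k (p + q) = dd k p + dd k q"
  by (simp add: dd_def lin_add)

lemma dd_diff: "dd k (p - q) = dd k p - dd k q"
  by (simp add: dd_def lin_diff)

lemma dd_uminus: "dd k (- p) = - dd k p"
  by (simp add: dd_def lin_uminus)

lemma dd_sum: "dd k (\<Sum>i\<in>I. f i) = (\<Sum>i\<in>I. dd k (f i))"
  by (simp add: dd_def lin_sum)

lemma dd_zero[simp]: "dd k 0 = 0"
  by (simp add: dd_def)

lemma Xv_diff_nz: "Xv k - Xv (Suc k) \<noteq> (0::'a::comm_ring_1 mpoly)"
proof
  assume "Xv k - Xv (Suc k) = (0::'a mpoly)"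
  then have e: "Xv k = (Xv (Suc k) :: 'a mpoly)" by simp
  have ne: "Poly_Mapping.single (Suc k) (1::nat) \<noteq> Poly_Mapping.single k 1"
  proof
    assume "Poly_Mapping.single (Suc k) (1::nat) = Poly_Mapping.single k 1"
    then have "Poly_Mapping.lookup (Poly_Mapping.single (Suc k) (1::nat)) k = Poly_Mapping.lookup (Poly_Mapping.single k 1) k"
      by simp
    then show False by (simp add: lookup_single)
  qed
  have "Poly_Mapping.lookup (Xv k :: 'a mpoly) (Poly_Mapping.single k 1) = 1" by (simp add: Xv_def)
  moreover have "Poly_Mapping.lookup (Xv (Suc k) :: 'a mpoly) (Poly_Mapping.single k 1) = 0"
    using ne by (simp add: Xv_def lookup_single)
  ultimately show False using e by simp
qed

lemma cancel_Xv:
  assumes "(Xv k - Xv (Suc k)) * a = (Xv k - Xv (Suc k)) * b" shows "a = (b :: 'a::field mpoly)"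
  using mult_left_cancel[OF Xv_diff_nz[of k]] assms by blast

lemma dd_sym: "perm_poly (sk k) p = p \<Longrightarrow> dd k p = (0 :: 'a::field mpoly)"
  using dd_eq[of k p] cancel_Xv[of k "dd k p" 0] by simp

lemma dd_leibniz: "dd k (q * g) = dd k q * g + perm_poly (sk k) q * dd k (g :: 'a::field mpoly)"
proof (rule cancel_Xv[of k])
  have b: "bij (sk k)" by simp
  let ?X = "Xv k - Xv (Suc k) :: 'a mpoly"
  have "?X * (dd k q * g + perm_poly (sk k) q * dd k g) = (?X * dd k q) * g + perm_poly (sk k) q * (?X * dd k g)"
    by (simp add: algebra_simps)
  also have "\<dots> = (q - perm_poly (sk k) q) * g + perm_poly (sk k) q * (g - perm_poly (sk k) g)"
    by (simp only: dd_eq)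
  also have "\<dots> = q * g - perm_poly (sk k) (q * g)"
    by (simp add: perm_mult[OF b] algebra_simps)
  also have "\<dots> = ?X * dd k (q * g)"
    by (simp only: dd_eq)
  finally show "?X * dd k (q * g) = ?X * (dd k q * g + perm_poly (sk k) q * dd k g)" by (rule sym)
qed

lemma keys_ddmon:
  assumes "s \<in> Poly_Mapping.keys (ddmon k t :: 'a::comm_ring_1 mpoly)"
  shows "(\<forall>j. j \<noteq> k \<and> j \<noteq> Suc k \<longrightarrow> Poly_Mapping.lookup s j = Poly_Mapping.lookup t j) \<and>
         Poly_Mapping.lookup s k < max (Poly_Mapping.lookup t k) (Poly_Mapping.lookup t (Suc k)) \<and>
         Poly_Mapping.lookup s (Suc k) < max (Poly_Mapping.lookup t k) (Poly_Mapping.lookup t (Suc k))"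
proof -
  define a where "a = Poly_Mapping.lookup t k"
  define b where "b = Poly_Mapping.lookup t (Suc k)"
  define u where "u = t - Poly_Mapping.single k a - Poly_Mapping.single (Suc k) b"
  define c where "c = min a b"
  define m where "m = max a b - c"
  have lu: "Poly_Mapping.lookup u j = (if j = k \<or> j = Suc k then 0 else Poly_Mapping.lookup t j)" for j
    by (auto simp: u_def lookup_minus lookup_single a_def b_def)
  let ?S = "\<Sum>i<m. mon (u + Poly_Mapping.single k (c + i) + Poly_Mapping.single (Suc k) (c + (m - Suc i))) :: 'a mpoly"
  have dm: "ddmon k t = (if b \<le> a then 1 else -1) * ?S"
    unfolding ddmon_def Let_def a_def b_def u_def c_def m_def by simp
  have "Poly_Mapping.keys (ddmon k t :: 'a mpoly) \<subseteq> Poly_Mapping.keys ?S"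
    unfolding dm by (auto simp: keys_minus)
  also have "\<dots> \<subseteq> (\<Union>i\<in>{..<m}. {u + Poly_Mapping.single k (c + i) + Poly_Mapping.single (Suc k) (c + (m - Suc i))})"
    by (rule order.trans[OF keys_sum]) auto
  finally obtain i where i: "i < m" "s = u + Poly_Mapping.single k (c + i) + Poly_Mapping.single (Suc k) (c + (m - Suc i))"
    using assms by blast
  have "c + m = max a b" by (simp add: c_def m_def)
  then show ?thesis using i unfolding a_def[symmetric] b_def[symmetric]
    by (auto simp: lookup_add lu lookup_single)
qed

lemma keys_dd:
  assumes "s \<in> Poly_Mapping.keys (dd k p :: 'a::comm_ring_1 mpoly)"
  obtains t where "t \<in> Poly_Mapping.keys p" "s \<in> Poly_Mapping.keys (ddmon k t :: 'a mpoly)"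
  using assms keys_lin[of "ddmon k" p] unfolding dd_def by blast

lemma in_KX_dd:
  assumes "in_KX n p" "1 \<le> k" "Suc k \<le> n"
  shows "in_KX n (dd k (p :: 'a::comm_ring_1 mpoly))"
  unfolding in_KX_def
proof
  fix s assume "s \<in> Poly_Mapping.keys (dd k p)"
  then obtain t where t: "t \<in> Poly_Mapping.keys p" "s \<in> Poly_Mapping.keys (ddmon k t :: 'a mpoly)"
    by (rule keys_dd)
  have kt: "Poly_Mapping.keys t \<subseteq> {1..n}" using assms(1) t(1) by (auto simp: in_KX_def)
  have ks: "(\<forall>j. j \<noteq> k \<and> j \<noteq> Suc k \<longrightarrow> Poly_Mapping.lookup s j = Poly_Mapping.lookup t j)"
    using keys_ddmon[OF t(2)] by blast
  show "Poly_Mapping.keys s \<subseteq> {1..n}"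
  proof
    fix j assume j: "j \<in> Poly_Mapping.keys s"
    show "j \<in> {1..n}"
    proof (cases "j = k \<or> j = Suc k")
      case True then show ?thesis using assms by auto
    next
      case False
      then have "j \<in> Poly_Mapping.keys t" using ks j by (auto simp: in_keys_iff)
      then show ?thesis using kt by blast
    qed
  qed
qed

definition Vred :: "nat \<Rightarrow> nat \<Rightarrow> 'a::zero mpoly \<Rightarrow> bool" where
  "Vred n d p \<longleftrightarrow> in_KX n p \<and> (\<forall>t\<in>Poly_Mapping.keys p. \<forall>i\<in>{1..n}. Poly_Mapping.lookup t i \<le> d - i)"

lemma Vred_dd:
  assumes "Vred n d p" "1 \<le> k" "Suc k \<le> n"
  shows "Vred n d (dd k (p :: 'a::comm_ring_1 mpoly))"
  unfolding Vred_def
proof (intro conjI ballI)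
  show "in_KX n (dd k p)" using assms in_KX_dd unfolding Vred_def by blast
  fix s i assume s: "s \<in> Poly_Mapping.keys (dd k p)" and i: "i \<in> {1..n}"
  obtain t where t: "t \<in> Poly_Mapping.keys p" "s \<in> Poly_Mapping.keys (ddmon k t :: 'a mpoly)"
    using s by (rule keys_dd)
  have tb: "\<And>j. j \<in> {1..n} \<Longrightarrow> Poly_Mapping.lookup t j \<le> d - j" using assms(1) t(1) by (auto simp: Vred_def)
  note ks = keys_ddmon[OF t(2)]
  have mx: "max (Poly_Mapping.lookup t k) (Poly_Mapping.lookup t (Suc k)) \<le> d - k"
    using tb[of k] tb[of "Suc k"] assms by auto
  show "Poly_Mapping.lookup s i \<le> d - i"
  proof (cases "i = k")
    case True then show ?thesis using ks mx by auto
  next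
    case False
    show ?thesis
    proof (cases "i = Suc k")
      case True then show ?thesis using ks mx by auto
    next
      case False
      then show ?thesis using ks \<open>i \<noteq> k\<close> tb[OF i] by auto
    qed
  qed
qed

definition clr :: "nat \<Rightarrow> (nat \<Rightarrow>\<^sub>0 nat) \<Rightarrow> (nat \<Rightarrow>\<^sub>0 nat)" where
  "clr i t = t - Poly_Mapping.single i (Poly_Mapping.lookup t i)"

lemma lookup_clr: "Poly_Mapping.lookup (clr i t) j = (if j = i then 0 else Poly_Mapping.lookup t j)"
  by (simp add: clr_def lookup_minus lookup_single)

lemma clr_split: "t = clr i t + Poly_Mapping.single i (Poly_Mapping.lookup t i)"
  by (rule poly_mapping_eqI) (simp add: lookup_add lookup_clr lookup_single)

lemma clr_add: "Poly_Mapping.lookup s i = 0 \<Longrightarrow> clr i (t + s) = clr i t + s"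
  by (rule poly_mapping_eqI) (simp add: lookup_add lookup_clr)

lemma clr_single[simp]: "clr i (Poly_Mapping.single i a) = 0"
  by (rule poly_mapping_eqI) (simp add: lookup_clr lookup_single)

lemma keys_clr: "Poly_Mapping.keys (clr i t) = Poly_Mapping.keys t - {i}"
  by (auto simp: in_keys_iff lookup_clr split: if_splits)

lemma mon_clr: "mon t = mon (clr i t) * (Xv i ^ Poly_Mapping.lookup t i :: 'a::comm_ring_1 mpoly)"
  by (subst clr_split[of t i]) (simp add: mon_add Xv_power)

definition coeffv :: "nat \<Rightarrow> nat \<Rightarrow> 'a::comm_ring_1 mpoly \<Rightarrow> 'a mpoly" where
  "coeffv i b p = lin (\<lambda>t. if Poly_Mapping.lookup t i = b then mon (clr i t) else 0) p"

lemma coeffv_decomp: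
  assumes "\<And>t. t \<in> Poly_Mapping.keys p \<Longrightarrow> Poly_Mapping.lookup t i \<le> B"
  shows "p = (\<Sum>b\<le>B. Xv i ^ b * coeffv i b (p :: 'a::comm_ring_1 mpoly))"
proof -
  have "(\<Sum>b\<le>B. Xv i ^ b * coeffv i b p) = lin (\<lambda>t. \<Sum>b\<le>B. Xv i ^ b * (if Poly_Mapping.lookup t i = b then mon (clr i t) else 0)) p"
    by (simp add: coeffv_def lin_def sum_distrib_left mult_ac sum.swap[of _ "{..B}"])
  also have "\<dots> = lin mon p"
  proof (rule lin_cong)
    fix t assume t: "t \<in> Poly_Mapping.keys p"
    have "(\<Sum>b\<le>B. Xv i ^ b * (if Poly_Mapping.lookup t i = b then mon (clr i t) else (0::'a mpoly)))
        = (\<Sum>b\<le>B. if b = Poly_Mapping.lookup t i then Xv i ^ b * mon (clr i t) else 0)"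
      by (rule sum.cong) auto
    also have "\<dots> = Xv i ^ Poly_Mapping.lookup t i * mon (clr i t)"
      using assms[OF t] by (simp add: sum.delta')
    also have "\<dots> = mon t" by (simp add: mon_clr[of t i] mult.commute)
    finally show "(\<Sum>b\<le>B. Xv i ^ b * (if Poly_Mapping.lookup t i = b then mon (clr i t) else (0::'a mpoly))) = mon t" .
  qed
  finally show ?thesis by (simp add: lin_id)
qed

lemma coeffv_add: "coeffv i b (p + q) = coeffv i b p + coeffv i b q"
  by (simp add: coeffv_def lin_add)

lemma coeffv_mon: "coeffv i b (mon t) = (if Poly_Mapping.lookup t i = b then mon (clr i t) else 0)"
  by (simp add: coeffv_def lin_mon)

lemma coeffv_zero_keys:
  assumes "\<And>t. t \<in> Poly_Mapping.keys p \<Longrightarrow> Poly_Mapping.lookup t i \<noteq> b"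
  shows "coeffv i b p = 0"
  unfolding coeffv_def by (subst lin_cong[of p _ "\<lambda>t. 0"]) (auto simp: assms lin_fun_zero)

lemma keys_coeffv:
  assumes "s \<in> Poly_Mapping.keys (coeffv i b p)"
  shows "\<exists>t\<in>Poly_Mapping.keys p. s = clr i t"
proof -
  from assms obtain t where "t \<in> Poly_Mapping.keys p"
    "s \<in> Poly_Mapping.keys (if Poly_Mapping.lookup t i = b then mon (clr i t) else (0::'a mpoly))"
    using keys_lin unfolding coeffv_def by blast
  then show ?thesis by (auto split: if_splits)
qed

definition Cset :: "nat \<Rightarrow> (nat \<Rightarrow>\<^sub>0 nat) set" where
  "Cset i = {s. Poly_Mapping.keys s \<subseteq> {1..i} \<and> Poly_Mapping.lookup s i = 0}"

function Rr :: "'a::field multiset \<Rightarrow> nat \<Rightarrow> nat \<Rightarrow> 'a mpoly" where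
  "Rr A i a = (if a < size A - i + 1 then Xv i ^ a else
     - (\<Sum>b<size A - i + 1. coeffv i b (gpoly A i) * Rr A i (a - (size A - i + 1) + b)))"
  by auto
termination by (relation "measure (\<lambda>(A, i, a). a)") auto

declare Rr.simps[simp del]


definition rho :: "'a::field multiset \<Rightarrow> nat \<Rightarrow> 'a mpoly \<Rightarrow> 'a mpoly" where
  "rho A i p = lin (\<lambda>t. mon (clr i t) * Rr A i (Poly_Mapping.lookup t i)) p"

lemma lin_mult_right_mon:
  assumes "\<And>t s. s \<in> Poly_Mapping.keys c \<Longrightarrow> \<phi> (t + s) = \<phi> t * mon s"
  shows "lin \<phi> (p * c) = lin \<phi> p * c"
proof -
  have "lin \<phi> (p * c) = (\<Sum>t\<in>Poly_Mapping.keys p. \<Sum>s\<in>Poly_Mapping.keys c.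
     (mconst (Poly_Mapping.lookup p t) * \<phi> t) * (mconst (Poly_Mapping.lookup c s) * mon s))"
    unfolding lin_mult_expand by (intro sum.cong refl) (simp add: assms mconst_mult[symmetric] mult_ac)
  also have "\<dots> = lin \<phi> p * lin mon c"
    by (simp add: lin_def sum_product)
  finally show ?thesis by (simp add: lin_id)
qed

lemma rho_add: "rho A i (p + q) = rho A i p + rho A i q"
  by (simp add: rho_def lin_add)

lemma rho_diff: "rho A i (p - q) = rho A i p - rho A i q"
  by (simp add: rho_def lin_diff)

lemma rho_sum: "rho A i (\<Sum>j\<in>J. f j) = (\<Sum>j\<in>J. rho A i (f j))"
  by (simp add: rho_def lin_sum)

lemma rho_mconst_mult: "rho A i (mconst c * p) = mconst c * rho A i p"
  by (simp add: rho_def lin_mconst_mult)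

lemma rho_zero[simp]: "rho A i 0 = 0"
  by (simp add: rho_def)

lemma rho_mon: "rho A i (mon t) = mon (clr i t) * Rr A i (Poly_Mapping.lookup t i)"
  by (simp add: rho_def lin_mon)

lemma rho_mult_right:
  assumes "\<And>s. s \<in> Poly_Mapping.keys c \<Longrightarrow> Poly_Mapping.lookup s i = 0"
  shows "rho A i (p * c) = rho A i p * c"
  unfolding rho_def
  by (rule lin_mult_right_mon) (simp add: assms clr_add lookup_add mon_add mult_ac)

lemma rho_pow_mult:
  assumes "\<And>s. s \<in> Poly_Mapping.keys q \<Longrightarrow> Poly_Mapping.lookup s i = 0"
  shows "rho A i (Xv i ^ a * q) = Rr A i a * q"
  by (simp add: rho_mult_right[OF assms] Xv_power rho_mon mon_zero)

context
  fixes A :: "'a::field multiset" and d :: nat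
  assumes dA: "size A = d"
begin

lemma gpoly_decomp:
  assumes "1 \<le> i" "i \<le> d"
  shows "gpoly A i = (\<Sum>b\<le>d - i + 1. Xv i ^ b * coeffv i b (gpoly A i))"
proof (rule coeffv_decomp)
  fix t assume "t \<in> Poly_Mapping.keys (gpoly A i)"
  then have "t = Poly_Mapping.single i (d - i + 1) \<or> t \<in> Rset i (d - i + 1)"
    using keys_gpoly[OF dA assms] by blast
  then show "Poly_Mapping.lookup t i \<le> d - i + 1" by (auto simp: Rset_def)
qed

lemma cf_top:
  assumes "1 \<le> i" "i \<le> d"
  shows "coeffv i (d - i + 1) (gpoly A i) = 1"
proof -
  have "coeffv i (d - i + 1) (grest A d i) = 0"
    by (rule coeffv_zero_keys) (use keys_grest[OF dA assms] in \<open>auto simp: Rset_def\<close>)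
  then show ?thesis
    unfolding gpoly_split[OF dA assms] coeffv_add Xv_power coeffv_mon by (simp add: mon_zero)
qed

lemma keys_cf:
  assumes "1 \<le> i" "i \<le> d"
  shows "Poly_Mapping.keys (coeffv i b (gpoly A i)) \<subseteq> Cset i"
proof
  fix s assume "s \<in> Poly_Mapping.keys (coeffv i b (gpoly A i))"
  then obtain t where t: "t \<in> Poly_Mapping.keys (gpoly A i)" "s = clr i t" using keys_coeffv by blast
  have "Poly_Mapping.keys t \<subseteq> {1..i}" using keys_gpoly_sub[OF dA assms t(1)] .
  then show "s \<in> Cset i" using t(2) by (auto simp: Cset_def keys_clr lookup_clr)
qed

lemma in_KX_cf:
  assumes "1 \<le> i" "i \<le> d" "i \<le> n"
  shows "in_KX n (coeffv i b (gpoly A i))"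
  unfolding in_KX_def using keys_cf[OF assms(1,2)] assms(3) by (fastforce simp: Cset_def)

lemma gpoly_decomp2:
  assumes "1 \<le> i" "i \<le> d"
  shows "gpoly A i = Xv i ^ (d - i + 1) + (\<Sum>b<d - i + 1. Xv i ^ b * coeffv i b (gpoly A i))"
proof -
  have "{..d - i + 1} = insert (d - i + 1) {..<d - i + 1}" by auto
  then show ?thesis
    using gpoly_decomp[OF assms] cf_top[OF assms] by simp
qed

lemma Rr_low: "a < d - i + 1 \<Longrightarrow> Rr A i a = Xv i ^ a"
  by (simp add: Rr.simps dA)

lemma Rr_high: "Rr A i (e + (d - i + 1)) = - (\<Sum>b<d - i + 1. coeffv i b (gpoly A i) * Rr A i (e + b))"
  by (subst Rr.simps) (simp add: dA)

lemma keys_Rr: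
  assumes "1 \<le> i" "i \<le> d"
  shows "Poly_Mapping.keys (Rr A i a) \<subseteq> Rset i (d - i + 1)"
proof (induction a rule: less_induct)
  case (less a)
  show ?case
  proof (cases "a < d - i + 1")
    case True
    then show ?thesis using assms by (simp add: Rr_low Xv_power Rset_def)
  next
    case False
    then obtain e where e: "a = e + (d - i + 1)" by (metis add.commute le_add_diff_inverse not_less)
    have "Poly_Mapping.keys (coeffv i b (gpoly A i) * Rr A i (e + b)) \<subseteq> Rset i (d - i + 1)"
      if b: "b < d - i + 1" for b
    proof
      fix u assume "u \<in> Poly_Mapping.keys (coeffv i b (gpoly A i) * Rr A i (e + b))"
      then obtain s r where sr: "s \<in> Poly_Mapping.keys (coeffv i b (gpoly A i))" "r \<in> Poly_Mapping.keys (Rr A i (e + b))" "u = s + r"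
        using keys_mult_sub by blast
      have "s \<in> Cset i" using sr(1) keys_cf[OF assms] by blast
      moreover have "r \<in> Rset i (d - i + 1)" using sr(2) less[of "e + b"] e b by auto
      ultimately show "u \<in> Rset i (d - i + 1)" using sr(3) by (auto simp: Cset_def Rset_def keys_add_nat lookup_add)
    qed
    then show ?thesis unfolding e Rr_high keys_minus
      by (intro order.trans[OF keys_sum] UN_least) auto
  qed
qed

definition gm :: "nat \<Rightarrow> nat \<Rightarrow> 'a mpoly \<Rightarrow> bool" where
  "gm n i p \<longleftrightarrow> (\<exists>Q. in_KX n Q \<and> p = Q * gpoly A i)"

lemma gm_zero: "gm n i 0"
  unfolding gm_def by (rule exI[of _ 0]) simp

lemma gm_add: "gm n i p \<Longrightarrow> gm n i q \<Longrightarrow> gm n i (p + q)"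
  unfolding gm_def by (metis in_KX_add distrib_right)

lemma gm_diff: "gm n i p \<Longrightarrow> gm n i q \<Longrightarrow> gm n i (p - q)"
  unfolding gm_def by (metis in_KX_diff left_diff_distrib)

lemma gm_mult: "in_KX n c \<Longrightarrow> gm n i p \<Longrightarrow> gm n i (c * p)"
  unfolding gm_def by (metis in_KX_mult mult.assoc)

lemma gm_sum: "(\<And>j. j \<in> J \<Longrightarrow> gm n i (f j)) \<Longrightarrow> gm n i (\<Sum>j\<in>J. f j)"
  by (induction J rule: infinite_finite_induct) (auto intro: gm_add gm_zero)

lemma gm_g: "in_KX n Q \<Longrightarrow> gm n i (Q * gpoly A i)"
  unfolding gm_def by blast

lemma Rr_gm:
  assumes "1 \<le> i" "i \<le> d" "i \<le> n"
  shows "gm n i (Xv i ^ a - Rr A i a)"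
proof (induction a rule: less_induct)
  case (less a)
  show ?case
  proof (cases "a < d - i + 1")
    case True
    then show ?thesis by (simp add: Rr_low gm_zero)
  next
    case False
    then obtain e where e: "a = e + (d - i + 1)" by (metis add.commute le_add_diff_inverse not_less)
    let ?D = "d - i + 1"
    let ?c = "\<lambda>b. coeffv i b (gpoly A i)"
    have "Xv i ^ a - Rr A i a = Xv i ^ e * (Xv i ^ ?D + (\<Sum>b<?D. Xv i ^ b * ?c b)) - (\<Sum>b<?D. ?c b * (Xv i ^ (e + b) - Rr A i (e + b)))"
      unfolding e Rr_high by (simp add: algebra_simps sum_distrib_left sum_subtractf power_add)
    also have "\<dots> = Xv i ^ e * gpoly A i - (\<Sum>b<?D. ?c b * (Xv i ^ (e + b) - Rr A i (e + b)))"
      using gpoly_decomp2[OF assms(1,2)] by simp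
    finally have eq: "Xv i ^ a - Rr A i a = Xv i ^ e * gpoly A i - (\<Sum>b<?D. ?c b * (Xv i ^ (e + b) - Rr A i (e + b)))" .
    have "gm n i (?c b * (Xv i ^ (e + b) - Rr A i (e + b)))" if "b < ?D" for b
      using that e by (intro gm_mult in_KX_cf assms less) auto
    then have "gm n i (\<Sum>b<?D. ?c b * (Xv i ^ (e + b) - Rr A i (e + b)))" by (intro gm_sum) auto
    moreover have "gm n i (Xv i ^ e * gpoly A i)" using assms by (intro gm_g in_KX_power in_KX_Xv) auto
    ultimately show ?thesis unfolding eq by (rule gm_diff[rotated])
  qed
qed

end

primrec Nf :: "'a::field multiset \<Rightarrow> nat \<Rightarrow> 'a mpoly \<Rightarrow> 'a mpoly" where
  "Nf A 0 p = p"
| "Nf A (Suc j) p = Nf A j (rho A (Suc j) p)"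

lemma Nf_add: "Nf A j (p + q) = Nf A j p + Nf A j q"
  by (induction j arbitrary: p q) (simp_all add: rho_add)

lemma Nf_diff: "Nf A j (p - q) = Nf A j p - Nf A j q"
  by (induction j arbitrary: p q) (simp_all add: rho_diff)

lemma Nf_zero[simp]: "Nf A j 0 = 0"
  by (induction j) simp_all

lemma Nf_sum: "Nf A j (\<Sum>i\<in>I. f i) = (\<Sum>i\<in>I. Nf A j (f i))"
  by (induction I rule: infinite_finite_induct) (simp_all add: Nf_add)

lemma gen_ideal_add:
  assumes "p \<in> gen_ideal n g" "q \<in> gen_ideal n g"
  shows "p + q \<in> gen_ideal n (g :: nat \<Rightarrow> 'a::comm_ring_1 mpoly)"
proof -
  obtain q1 where q1: "\<forall>i\<in>{1..n}. in_KX n (q1 i)" "p = (\<Sum>i = 1..n. q1 i * g i)"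
    using assms(1) unfolding gen_ideal_def by blast
  obtain q2 where q2: "\<forall>i\<in>{1..n}. in_KX n (q2 i)" "q = (\<Sum>i = 1..n. q2 i * g i)"
    using assms(2) unfolding gen_ideal_def by blast
  show ?thesis unfolding gen_ideal_def using q1 q2
    by (intro CollectI exI[of _ "\<lambda>i. q1 i + q2 i"]) (auto intro: in_KX_add simp: sum.distrib distrib_right)
qed

lemma gen_ideal_zero: "0 \<in> gen_ideal n (g :: nat \<Rightarrow> 'a::comm_ring_1 mpoly)"
  unfolding gen_ideal_def by (rule CollectI, rule exI[of _ "\<lambda>i. 0"]) simp

lemma gen_ideal_mult:
  assumes "in_KX n c" "p \<in> gen_ideal n g"
  shows "c * p \<in> gen_ideal n (g :: nat \<Rightarrow> 'a::comm_ring_1 mpoly)"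
proof -
  obtain q where q: "\<forall>i\<in>{1..n}. in_KX n (q i)" "p = (\<Sum>i = 1..n. q i * g i)"
    using assms(2) unfolding gen_ideal_def by blast
  show ?thesis unfolding gen_ideal_def using q assms(1)
    by (intro CollectI exI[of _ "\<lambda>i. c * q i"]) (auto intro: in_KX_mult simp: sum_distrib_left mult.assoc)
qed

lemma gen_ideal_uminus:
  assumes "p \<in> gen_ideal n g" shows "- p \<in> gen_ideal n (g :: nat \<Rightarrow> 'a::comm_ring_1 mpoly)"
proof -
  have "in_KX n (mconst (-1) :: 'a mpoly)" by simp
  then have "mconst (-1) * p \<in> gen_ideal n g" using assms by (rule gen_ideal_mult)
  then show ?thesis by (simp add: mconst_uminus)
qed

lemma gen_ideal_diff: "p \<in> gen_ideal n g \<Longrightarrow> q \<in> gen_ideal n g \<Longrightarrow> p - q \<in> gen_ideal n (g :: nat \<Rightarrow> 'a::comm_ring_1 mpoly)"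
  using gen_ideal_add[of p n g "- q"] gen_ideal_uminus by fastforce

lemma gen_ideal_sum: "(\<And>j. j \<in> J \<Longrightarrow> f j \<in> gen_ideal n g) \<Longrightarrow> (\<Sum>j\<in>J. f j) \<in> gen_ideal n (g :: nat \<Rightarrow> 'a::comm_ring_1 mpoly)"
  by (induction J rule: infinite_finite_induct) (auto intro: gen_ideal_add gen_ideal_zero)

lemma gen_ideal_gen:
  assumes "i \<in> {1..n}" "in_KX n Q" shows "Q * g i \<in> gen_ideal n (g :: nat \<Rightarrow> 'a::comm_ring_1 mpoly)"
proof -
  have "(\<Sum>j\<in>{1..n}. (if j = i then Q else 0) * g j) = (\<Sum>j\<in>{1..n}. if j = i then Q * g j else 0)"
    by (rule sum.cong) auto
  also have "\<dots> = Q * g i" using assms(1) by (simp add: sum.delta')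
  finally show ?thesis unfolding gen_ideal_def using assms(2)
    by (intro CollectI exI[of _ "\<lambda>j. if j = i then Q else 0"]) auto
qed

context
  fixes A :: "'a::field multiset" and d :: nat
  assumes dA: "size A = d"
begin

lemma rho_gmult:
  assumes "1 \<le> i" "i \<le> d"
  shows "rho A i (q * gpoly A i) = 0"
proof -
  let ?D = "d - i + 1"
  let ?c = "\<lambda>b. coeffv i b (gpoly A i)"
  have mt: "rho A i (mon t * gpoly A i) = 0" for t
  proof -
    have keys0: "Poly_Mapping.lookup s i = 0" if s_in: "s \<in> Poly_Mapping.keys (mon (clr i t) * ?c b)" for s b
    proof -
      obtain x y where "x \<in> Poly_Mapping.keys (mon (clr i t) :: 'a mpoly)" "y \<in> Poly_Mapping.keys (?c b)" "s = x + y"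
        using keys_mult_sub[OF s_in] by blast
      then show ?thesis using keys_cf[OF dA assms] by (auto simp: Cset_def lookup_add lookup_clr)
    qed
    have eq: "mon t * gpoly A i = (\<Sum>b\<le>?D. Xv i ^ (Poly_Mapping.lookup t i + b) * (mon (clr i t) * ?c b))"
      by (subst gpoly_decomp[OF dA assms], subst mon_clr[of t i], simp only: sum_distrib_left)
        (rule sum.cong[OF refl], simp add: power_add mult_ac)
    have "rho A i (mon t * gpoly A i) = (\<Sum>b\<le>?D. rho A i (Xv i ^ (Poly_Mapping.lookup t i + b) * (mon (clr i t) * ?c b)))"
      unfolding eq by (rule rho_sum)
    also have "\<dots> = (\<Sum>b\<le>?D. Rr A i (Poly_Mapping.lookup t i + b) * (mon (clr i t) * ?c b))"
      by (rule sum.cong[OF refl], rule rho_pow_mult, rule keys0)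
    also have "\<dots> = mon (clr i t) * (\<Sum>b\<le>?D. ?c b * Rr A i (Poly_Mapping.lookup t i + b))"
      unfolding sum_distrib_left by (rule sum.cong[OF refl]) (simp add: mult_ac)
    also have "(\<Sum>b\<le>?D. ?c b * Rr A i (Poly_Mapping.lookup t i + b)) = 0"
    proof -
      let ?f = "\<lambda>b. ?c b * Rr A i (Poly_Mapping.lookup t i + b)"
      have ins: "{..?D} = insert ?D {..<?D}" by auto
      have "(\<Sum>b\<le>?D. ?f b) = (\<Sum>b\<in>insert ?D {..<?D}. ?f b)" by (simp only: ins)
      also have "\<dots> = ?f ?D + (\<Sum>b<?D. ?f b)" by (rule sum.insert) auto
      also have "?f ?D = - (\<Sum>b<?D. ?f b)"
        unfolding cf_top[OF dA assms] Rr_high[OF dA, of i "Poly_Mapping.lookup t i"] by simp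
      finally show ?thesis by simp
    qed
    finally show ?thesis by simp
  qed
  have "q * gpoly A i = (\<Sum>t\<in>Poly_Mapping.keys q. mconst (Poly_Mapping.lookup q t) * (mon t * gpoly A i))"
  proof -
    have "q * gpoly A i = lin mon q * gpoly A i" by (simp add: lin_id)
    also have "\<dots> = (\<Sum>t\<in>Poly_Mapping.keys q. mconst (Poly_Mapping.lookup q t) * (mon t * gpoly A i))"
      unfolding lin_def sum_distrib_right by (simp only: mult.assoc)
    finally show ?thesis .
  qed
  then show ?thesis by (simp add: rho_sum rho_mconst_mult mt)
qed

lemma rho_mult_g_other:
  assumes "1 \<le> i'" "i' \<le> d" "i' < i"
  shows "rho A i (q * gpoly A i') = rho A i q * gpoly A i'"
proof (rule rho_mult_right)
  fix s assume "s \<in> Poly_Mapping.keys (gpoly A i')"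
  then have "Poly_Mapping.keys s \<subseteq> {1..i'}" by (rule keys_gpoly_sub[OF dA assms(1,2)])
  then show "Poly_Mapping.lookup s i = 0" using assms(3) by (auto simp: in_keys_iff)
qed

lemma keys_rho:
  assumes "1 \<le> i" "i \<le> d" "s \<in> Poly_Mapping.keys (rho A i p)"
  shows "\<exists>t\<in>Poly_Mapping.keys p. \<exists>r\<in>Rset i (d - i + 1). s = clr i t + r"
proof -
  obtain t where t: "t \<in> Poly_Mapping.keys p" "s \<in> Poly_Mapping.keys (mon (clr i t) * Rr A i (Poly_Mapping.lookup t i))"
    using assms(3) keys_lin unfolding rho_def by blast
  then obtain x r where "x \<in> Poly_Mapping.keys (mon (clr i t) :: 'a mpoly)" "r \<in> Poly_Mapping.keys (Rr A i (Poly_Mapping.lookup t i))" "s = x + r"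
    using keys_mult_sub by blast
  then show ?thesis using t(1) keys_Rr[OF dA assms(1,2)] by (auto split: if_splits)
qed

lemma rho_gm:
  assumes "1 \<le> i" "i \<le> d" "i \<le> n" "in_KX n p"
  shows "gm A n i (p - rho A i p)"
proof -
  have "p - rho A i p = lin mon p - lin (\<lambda>t. mon (clr i t) * Rr A i (Poly_Mapping.lookup t i)) p"
    by (simp add: lin_id rho_def)
  also have "\<dots> = lin (\<lambda>t. mon t - mon (clr i t) * Rr A i (Poly_Mapping.lookup t i)) p"
    by (rule lin_fun_diff[symmetric])
  also have "\<dots> = lin (\<lambda>t. mon (clr i t) * (Xv i ^ Poly_Mapping.lookup t i - Rr A i (Poly_Mapping.lookup t i))) p"
  proof (rule lin_cong)
    fix t
    show "mon t - mon (clr i t) * Rr A i (Poly_Mapping.lookup t i) = mon (clr i t) * (Xv i ^ Poly_Mapping.lookup t i - Rr A i (Poly_Mapping.lookup t i))"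
      by (subst mon_clr[of t i]) (simp add: right_diff_distrib)
  qed
  also have "gm A n i \<dots>"
    unfolding lin_def
  proof (intro gm_sum[OF dA] gm_mult[OF dA] in_KX_mconst)
    fix t assume t: "t \<in> Poly_Mapping.keys p"
    then show "in_KX n (mon (clr i t))" using assms(4) by (intro in_KX_mon) (auto simp: in_KX_def keys_clr)
    show "gm A n i (Xv i ^ Poly_Mapping.lookup t i - Rr A i (Poly_Mapping.lookup t i))"
      by (rule Rr_gm[OF dA assms(1-3)])
  qed
  finally show ?thesis .
qed

lemma rho_id:
  assumes "\<And>t. t \<in> Poly_Mapping.keys p \<Longrightarrow> Poly_Mapping.lookup t i < d - i + 1"
  shows "rho A i p = p"
proof -
  have "rho A i p = lin mon p"
    unfolding rho_def
  proof (rule lin_cong)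
    fix t assume t: "t \<in> Poly_Mapping.keys p"
    have "Rr A i (Poly_Mapping.lookup t i) = Xv i ^ Poly_Mapping.lookup t i" by (rule Rr_low[OF dA assms[OF t]])
    then show "mon (clr i t) * Rr A i (Poly_Mapping.lookup t i) = mon t" by (simp add: mon_clr[of t i])
  qed
  then show ?thesis by (simp add: lin_id)
qed

lemma in_KX_rho:
  assumes "1 \<le> i" "i \<le> d" "i \<le> n" "in_KX n p"
  shows "in_KX n (rho A i p)"
  unfolding in_KX_def
proof
  fix s assume "s \<in> Poly_Mapping.keys (rho A i p)"
  then obtain t r where tr: "t \<in> Poly_Mapping.keys p" "r \<in> Rset i (d - i + 1)" "s = clr i t + r"
    using keys_rho[OF assms(1,2)] by blast
  then show "Poly_Mapping.keys s \<subseteq> {1..n}"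
    using assms(3,4) by (auto simp: in_KX_def Rset_def keys_add_nat keys_clr)
qed

lemma gm_ideal: "gm A n i p \<Longrightarrow> i \<in> {1..n} \<Longrightarrow> p \<in> gen_ideal n (gpoly A)"
  unfolding gm_def[OF dA] using gen_ideal_gen by blast

lemma Nf_in_I:
  assumes "j \<le> n" "j \<le> d" "in_KX n p"
  shows "p - Nf A j p \<in> gen_ideal n (gpoly A) \<and> in_KX n (Nf A j p)"
  using assms
proof (induction j arbitrary: p)
  case 0
  then show ?case by (simp add: gen_ideal_zero)
next
  case (Suc j)
  let ?p = "rho A (Suc j) p"
  have k: "in_KX n ?p" using Suc.prems by (intro in_KX_rho) auto
  have IH: "?p - Nf A j ?p \<in> gen_ideal n (gpoly A) \<and> in_KX n (Nf A j ?p)" using Suc k by auto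
  have "gm A n (Suc j) (p - ?p)" by (rule rho_gm) (use Suc.prems in auto)
  then have "p - ?p \<in> gen_ideal n (gpoly A)"
    by (rule gm_ideal) (use Suc.prems in auto)
  then have "(p - ?p) + (?p - Nf A j ?p) \<in> gen_ideal n (gpoly A)" using IH by (intro gen_ideal_add) auto
  then show ?case using IH by simp
qed

lemma Nf_red:
  assumes "j \<le> n" "j \<le> d" "in_KX n p" "\<And>t l. t \<in> Poly_Mapping.keys p \<Longrightarrow> l \<in> {Suc j..n} \<Longrightarrow> Poly_Mapping.lookup t l \<le> d - l"
  shows "Vred n d (Nf A j p)"
  using assms
proof (induction j arbitrary: p)
  case 0
  then show ?case by (simp add: Vred_def)
next
  case (Suc j)
  let ?p = "rho A (Suc j) p"
  have k: "in_KX n ?p" using Suc.prems by (intro in_KX_rho) auto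
  have "Poly_Mapping.lookup s l \<le> d - l" if s: "s \<in> Poly_Mapping.keys ?p" and l: "l \<in> {Suc j..n}" for s l
  proof -
    obtain t r where tr: "t \<in> Poly_Mapping.keys p" "r \<in> Rset (Suc j) (d - Suc j + 1)" "s = clr (Suc j) t + r"
      using keys_rho[OF _ _ s] Suc.prems by auto
    show ?thesis
    proof (cases "l = Suc j")
      case True
      then show ?thesis using tr by (auto simp: lookup_add lookup_clr Rset_def)
    next
      case False
      then have "Poly_Mapping.lookup r l = 0" using tr(2) l by (auto simp: Rset_def in_keys_iff)
      then have "Poly_Mapping.lookup s l = Poly_Mapping.lookup t l" using tr(3) False by (simp add: lookup_add lookup_clr)
      then show ?thesis using Suc.prems(4)[OF tr(1)] l False by auto
    qed
  qed
  then show ?case using Suc k by simp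
qed

lemma Nf_fix:
  assumes "Vred n d p" "j \<le> n"
  shows "Nf A j p = p"
  using assms
proof (induction j)
  case 0
  then show ?case by simp
next
  case (Suc j)
  have v: "\<And>t i. t \<in> Poly_Mapping.keys p \<Longrightarrow> i \<in> {1..n} \<Longrightarrow> Poly_Mapping.lookup t i \<le> d - i"
    using Suc.prems(1) unfolding Vred_def by blast
  have "rho A (Suc j) p = p"
  proof (rule rho_id)
    fix t assume "t \<in> Poly_Mapping.keys p"
    then have "Poly_Mapping.lookup t (Suc j) \<le> d - Suc j" by (rule v) (use Suc.prems in auto)
    then show "Poly_Mapping.lookup t (Suc j) < d - Suc j + 1" by simp
  qed
  then show ?case using Suc by simp
qed

lemma Nf_kill:
  assumes "1 \<le> i" "i \<le> j" "j \<le> d"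
  shows "Nf A j (q * gpoly A i) = 0"
  using assms
proof (induction j arbitrary: q)
  case 0
  then show ?case by simp
next
  case (Suc j)
  show ?case
  proof (cases "i = Suc j")
    case True
    then show ?thesis using Suc.prems by (simp add: rho_gmult)
  next
    case False
    then have "i \<le> j" using Suc.prems by simp
    have "rho A (Suc j) (q * gpoly A i) = rho A (Suc j) q * gpoly A i"
      using Suc.prems \<open>i \<le> j\<close> by (intro rho_mult_g_other) auto
    then show ?thesis using Suc.IH[of "rho A (Suc j) q"] Suc.prems \<open>i \<le> j\<close> by simp
  qed
qed

lemma red_ideal_zero:
  assumes "n \<le> d" "Vred n d r" "r \<in> gen_ideal n (gpoly A)"
  shows "r = 0"
proof -
  obtain q where q: "r = (\<Sum>i=1..n. q i * gpoly A i)" using assms(3) unfolding gen_ideal_def by blast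
  have "r = Nf A n r" using Nf_fix[OF assms(2)] by simp
  also have "\<dots> = (\<Sum>i=1..n. Nf A n (q i * gpoly A i))" unfolding q by (rule Nf_sum)
  also have "\<dots> = 0" using assms(1) by (intro sum.neutral) (auto intro: Nf_kill)
  finally show ?thesis .
qed

end

lemma mon_lex_asym: "mon_lex_less s t \<Longrightarrow> mon_lex_less t s \<Longrightarrow> False"
  unfolding mon_lex_less_def
proof (elim exE conjE)
  fix k1 k2
  assume a: "Poly_Mapping.lookup s k1 < Poly_Mapping.lookup t k1" "\<forall>j>k1. Poly_Mapping.lookup s j = Poly_Mapping.lookup t j"
     and b: "Poly_Mapping.lookup t k2 < Poly_Mapping.lookup s k2" "\<forall>j>k2. Poly_Mapping.lookup t j = Poly_Mapping.lookup s j"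
  show False
  proof (cases k1 k2 rule: linorder_cases)
    case less then show ?thesis using a b by fastforce
  next
    case equal then show ?thesis using a b by simp
  next
    case greater then show ?thesis using a b by fastforce
  qed
qed

lemma perm_gen:
  assumes "P id" "\<And>\<sigma> \<tau>. P \<sigma> \<Longrightarrow> P \<tau> \<Longrightarrow> P (\<sigma> \<circ> \<tau>)"
    "\<And>k. 1 \<le> k \<Longrightarrow> Suc k \<le> n \<Longrightarrow> P (transpose k (Suc k))"
    "\<sigma> permutes {1..n}"
  shows "P \<sigma>"
proof -
  have adj: "P (transpose a (a + m))" if "1 \<le> a" "a + m \<le> n" for a m
    using that
  proof (induction m arbitrary: a rule: less_induct)
    case (less m)
    show ?case
    proof (cases "m \<le> 1")
      case True
      then consider "m = 0" | "m = 1" by linarith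
      then show ?thesis
      proof cases
        case 1
        then have "transpose a (a + m) = id" by simp
        then show ?thesis using assms(1) by metis
      next
        case 2 then show ?thesis using assms(3) less.prems by simp
      qed
    next
      case False
      have e: "transpose a (Suc a) \<circ> transpose (Suc a) (a + m) \<circ> transpose a (Suc a) = transpose a (a + m)"
        using False by (intro transpose_comp_triple) auto
      have p1: "P (transpose a (Suc a))" using assms(3) less.prems False by simp
      have p2: "P (transpose (Suc a) (Suc a + (m - 1)))"
        using less.IH[of "m - 1" "Suc a"] less.prems False by simp
      have "Suc a + (m - 1) = a + m" using False by simp
      then have "P (transpose a (Suc a) \<circ> transpose (Suc a) (a + m) \<circ> transpose a (Suc a))"
        using p1 p2 assms(2) by metis
      then show ?thesis using e by simp
    qed
  qed
  have tr: "P (transpose a b)" if "a \<in> {1..n}" "b \<in> {1..n}" for a b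
  proof (cases "a \<le> b")
    case True
    then show ?thesis using adj[of a "b - a"] that by simp
  next
    case False
    then show ?thesis using adj[of b "a - b"] that by (simp add: transpose_commute)
  qed
  show ?thesis
    using assms(4) finite_atLeastAtMost[of 1 n]
  proof (induction rule: permutes_induct)
    case id then show ?case by (rule assms(1))
  next
    case (swap a b p)
    then show ?case using tr assms(2) by blast
  qed
qed

context
  fixes A :: "'a::field multiset" and d :: nat
  assumes dA: "size A = d"
begin

lemma lead_mon_gpoly:
  assumes "1 \<le> i" "i \<le> d"
  shows "lead_mon (gpoly A i) = Poly_Mapping.single i (d - i + 1)"
proof -
  let ?m = "Poly_Mapping.single i (d - i + 1)"
  have top: "?m \<in> Poly_Mapping.keys (gpoly A i)"
    using lookup_gpoly_top[OF dA assms] by (simp add: in_keys_iff)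
  have less: "mon_lex_less s ?m" if "s \<in> Poly_Mapping.keys (gpoly A i)" "s \<noteq> ?m" for s
  proof -
    have "s \<in> Rset i (d - i + 1)" using keys_gpoly[OF dA assms] that by blast
    then have "Poly_Mapping.lookup s i < d - i + 1" "\<forall>j>i. Poly_Mapping.lookup s j = 0"
      by (auto simp: Rset_def in_keys_iff)
    then show ?thesis unfolding mon_lex_less_def
      by (intro exI[of _ i]) (simp add: lookup_single)
  qed
  show ?thesis unfolding lead_mon_def
  proof (rule the_equality)
    show "?m \<in> Poly_Mapping.keys (gpoly A i) \<and> (\<forall>s\<in>Poly_Mapping.keys (gpoly A i). s \<noteq> ?m \<longrightarrow> mon_lex_less s ?m)"
      using top less by blast
  next
    fix t assume t: "t \<in> Poly_Mapping.keys (gpoly A i) \<and> (\<forall>s\<in>Poly_Mapping.keys (gpoly A i). s \<noteq> t \<longrightarrow> mon_lex_less s t)"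
    show "t = ?m"
    proof (rule ccontr)
      assume ne: "t \<noteq> ?m"
      then have "mon_lex_less ?m t" using t top by auto
      moreover have "mon_lex_less t ?m" using less t ne by blast
      ultimately show False by (rule mon_lex_asym)
    qed
  qed
qed

lemma reduced_iff:
  assumes "n \<le> d"
  shows "(\<forall>t\<in>Poly_Mapping.keys r. \<forall>i\<in>{1..n}. \<not> mon_dvd (lead_mon (gpoly A i)) t) \<longleftrightarrow>
         (\<forall>t\<in>Poly_Mapping.keys r. \<forall>i\<in>{1..n}. Poly_Mapping.lookup t i \<le> d - i)"
proof -
  have eq: "\<not> mon_dvd (lead_mon (gpoly A i)) t \<longleftrightarrow> Poly_Mapping.lookup t i \<le> d - i" if "i \<in> {1..n}" for i t
  proof -
    have l: "lead_mon (gpoly A i) = Poly_Mapping.single i (d - i + 1)"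
      using that assms by (intro lead_mon_gpoly) auto
    have "mon_dvd (Poly_Mapping.single i (d - i + 1)) t \<longleftrightarrow> d - i + 1 \<le> Poly_Mapping.lookup t i"
    proof
      assume "mon_dvd (Poly_Mapping.single i (d - i + 1)) t"
      then show "d - i + 1 \<le> Poly_Mapping.lookup t i" unfolding mon_dvd_def
        by (metis lookup_single_eq)
    next
      assume a: "d - i + 1 \<le> Poly_Mapping.lookup t i"
      show "mon_dvd (Poly_Mapping.single i (d - i + 1)) t" unfolding mon_dvd_def
      proof
        fix j show "Poly_Mapping.lookup (Poly_Mapping.single i (d - i + 1)) j \<le> Poly_Mapping.lookup t j"
          using a by (cases "j = i") (auto simp: lookup_single)
      qed
    qed
    then show ?thesis unfolding l by linarith
  qed
  show ?thesis using eq by blast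
qed

lemma Vred_diff:
  assumes "Vred n d p" "Vred n d q" shows "Vred n d (p - q :: 'a mpoly)"
  unfolding Vred_def
proof (intro conjI ballI)
  show "in_KX n (p - q)" using assms by (intro in_KX_diff) (auto simp: Vred_def)
  fix t i assume "t \<in> Poly_Mapping.keys (p - q)" "i \<in> {1..n}"
  then show "Poly_Mapping.lookup t i \<le> d - i"
    using assms keys_diff[of p q] unfolding Vred_def by blast
qed

lemma NF_char:
  assumes "n \<le> d" "in_KX n h"
  shows "normal_form n (gpoly A) h = Nf A n h \<and> Vred n d (Nf A n h) \<and> h - Nf A n h \<in> gen_ideal n (gpoly A)"
proof -
  let ?r = "Nf A n h"
  have I: "h - ?r \<in> gen_ideal n (gpoly A)" using Nf_in_I[OF dA _ assms(1) assms(2)] by simp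
  have V: "Vred n d ?r" using Nf_red[OF dA _ assms(1) assms(2)] by simp
  have "normal_form n (gpoly A) h = ?r"
    unfolding normal_form_def
  proof (rule the_equality)
    show "in_KX n ?r \<and> h - ?r \<in> gen_ideal n (gpoly A) \<and>
      (\<forall>t\<in>Poly_Mapping.keys ?r. \<forall>i\<in>{1..n}. \<not> mon_dvd (lead_mon (gpoly A i)) t)"
      using I V reduced_iff[OF assms(1), of ?r] unfolding Vred_def by blast
  next
    fix r assume r: "in_KX n r \<and> h - r \<in> gen_ideal n (gpoly A) \<and>
      (\<forall>t\<in>Poly_Mapping.keys r. \<forall>i\<in>{1..n}. \<not> mon_dvd (lead_mon (gpoly A i)) t)"
    then have Vr: "Vred n d r" using reduced_iff[OF assms(1), of r] unfolding Vred_def by blast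
    have "(h - ?r) - (h - r) \<in> gen_ideal n (gpoly A)" by (rule gen_ideal_diff[OF I]) (use r in blast)
    then have "r - ?r \<in> gen_ideal n (gpoly A)" by simp
    then have "r - ?r = 0" using red_ideal_zero[OF dA assms(1) Vred_diff[OF Vr V]] by simp
    then show "r = ?r" by simp
  qed
  then show ?thesis using I V by simp
qed

lemma dd_gpoly_self:
  assumes "1 \<le> k" "k < d"
  shows "dd k (gpoly A k) = gpoly A (Suc k)"
  by (rule cancel_Xv[of k]) (simp only: dd_eq gpoly_diff[OF dA assms])

lemma sk_gpoly_other:
  assumes "1 \<le> i" "i \<le> d" "i \<noteq> k" "1 \<le> k"
  shows "perm_poly (sk k) (gpoly A i) = gpoly A i"
proof (cases "i < k")
  case True
  then show ?thesis by (intro gpoly_perm_fix[OF dA assms(1,2)]) auto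
next
  case False
  then have "Suc k \<le> i" using assms by simp
  then have "sk k permutes {1..i}" using assms by (intro permutes_swap_id) auto
  then show ?thesis by (rule gpoly_perm_sym[OF dA])
qed

lemma dd_ideal:
  assumes "n \<le> d" "1 \<le> k" "Suc k \<le> n" "p \<in> gen_ideal n (gpoly A)"
  shows "dd k p \<in> gen_ideal n (gpoly A)"
proof -
  obtain q where q: "\<forall>i\<in>{1..n}. in_KX n (q i)" "p = (\<Sum>i = 1..n. q i * gpoly A i)"
    using assms(4) unfolding gen_ideal_def by blast
  have skp: "sk k permutes {1..n}" using assms by (intro permutes_swap_id) auto
  have "dd k (q i * gpoly A i) \<in> gen_ideal n (gpoly A)" if i: "i \<in> {1..n}" for i
  proof -
    have qi: "in_KX n (q i)" using q(1) i by blast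
    have e: "dd k (q i * gpoly A i) = dd k (q i) * gpoly A i + perm_poly (sk k) (q i) * dd k (gpoly A i)"
      by (rule dd_leibniz)
    have g1: "dd k (q i) * gpoly A i \<in> gen_ideal n (gpoly A)"
      using i qi assms by (intro gen_ideal_gen in_KX_dd) auto
    show ?thesis
    proof (cases "i = k")
      case True
      have dg: "dd k (gpoly A i) = gpoly A (Suc k)" using True assms dd_gpoly_self[of k] by simp
      have g2: "perm_poly (sk k) (q i) * gpoly A (Suc k) \<in> gen_ideal n (gpoly A)"
        using assms qi by (intro gen_ideal_gen in_KX_perm[OF skp]) auto
      show ?thesis unfolding e dg by (rule gen_ideal_add[OF g1 g2])
    next
      case False
      have "perm_poly (sk k) (gpoly A i) = gpoly A i"
        using False i assms by (intro sk_gpoly_other) auto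
      then have "dd k (gpoly A i) = 0" by (rule dd_sym)
      then show ?thesis using e g1 by simp
    qed
  qed
  then show ?thesis unfolding q(2) dd_sum by (intro gen_ideal_sum) auto
qed

lemma sk_ideal:
  assumes "n \<le> d" "1 \<le> k" "Suc k \<le> n" "p \<in> gen_ideal n (gpoly A)"
  shows "perm_poly (sk k) p \<in> gen_ideal n (gpoly A)"
proof -
  have e: "perm_poly (sk k) p = p - (Xv k - Xv (Suc k)) * dd k p" by (simp add: dd_eq)
  have "(Xv k - Xv (Suc k)) * dd k p \<in> gen_ideal n (gpoly A)"
    using assms by (intro gen_ideal_mult dd_ideal in_KX_diff in_KX_Xv) auto
  then show ?thesis unfolding e by (rule gen_ideal_diff[OF assms(4)])
qed

end

theorem proposition2p2:
  fixes A :: "'a::field multiset" and n d :: nat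
  assumes "1 \<le> n" and "n \<le> d" and "size A = d"
  shows "(\<forall>p \<sigma>. p \<in> gen_ideal n (gpoly A) \<and> \<sigma> permutes {1..n}
            \<longrightarrow> perm_poly \<sigma> p \<in> gen_ideal n (gpoly A))
       \<and> (\<forall>h. in_KX n h \<and> symmetric_poly n h \<longrightarrow>
            symmetric_poly n (normal_form n (gpoly A) h)
            \<and> (\<forall>t\<in>Poly_Mapping.keys (normal_form n (gpoly A) h). \<forall>i\<in>{1..n}. Poly_Mapping.lookup t i \<le> d - n))"
proof (intro conjI allI impI)
  note dA = assms(3)
  let ?I = "gen_ideal n (gpoly A)"
  fix p \<sigma> assume a: "p \<in> ?I \<and> \<sigma> permutes {1..n}"
  let ?P = "\<lambda>\<sigma>. bij \<sigma> \<and> (\<forall>p\<in>?I. perm_poly \<sigma> p \<in> ?I)"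
  have "?P \<sigma>"
  proof (rule perm_gen[of ?P])
    show "?P id" by simp
  next
    fix \<sigma> \<tau> assume "?P \<sigma>" "?P \<tau>"
    then show "?P (\<sigma> \<circ> \<tau>)" by (simp add: bij_comp perm_comp[symmetric])
  next
    fix k assume "1 \<le> k" "Suc k \<le> n"
    then show "?P (transpose k (Suc k))" using sk_ideal[OF dA assms(2)] by simp
  next
    show "\<sigma> permutes {1..n}" using a by simp
  qed
  then show "perm_poly \<sigma> p \<in> ?I" using a by blast
next
  note dA = assms(3)
  let ?I = "gen_ideal n (gpoly A)"
  fix h :: "'a mpoly" assume h: "in_KX n h \<and> symmetric_poly n h"
  define r where "r = Nf A n h"
  have nf: "normal_form n (gpoly A) h = r" "Vred n d r" "h - r \<in> ?I"
    using NF_char[OF dA assms(2)] h unfolding r_def by auto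
  have fixk: "perm_poly (sk k) r = r" if k: "1 \<le> k" "Suc k \<le> n" for k
  proof -
    have skp: "sk k permutes {1..n}" using k by (intro permutes_swap_id) auto
    have "perm_poly (sk k) h = h" using h skp by (simp add: symmetric_poly_def)
    then have dh: "dd k h = 0" by (rule dd_sym)
    have "dd k (h - r) \<in> ?I" using nf(3) k assms by (intro dd_ideal[OF dA]) auto
    then have "- dd k (h - r) \<in> ?I" by (rule gen_ideal_uminus)
    moreover have "- dd k (h - r) = dd k r" by (simp add: dd_diff dh)
    ultimately have "dd k r \<in> ?I" by simp
    moreover have "Vred n d (dd k r)" using nf(2) k by (rule Vred_dd)
    ultimately have "dd k r = 0" using red_ideal_zero[OF dA assms(2)] by blast
    then have "r - perm_poly (sk k) r = 0" using dd_eq[of k r] by simp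
    then show ?thesis by simp
  qed
  let ?Q = "\<lambda>\<sigma>. bij \<sigma> \<and> perm_poly \<sigma> r = r"
  have symr: "perm_poly \<sigma> r = r" if "\<sigma> permutes {1..n}" for \<sigma>
  proof -
    have "?Q \<sigma>"
    proof (rule perm_gen[of ?Q])
      show "?Q id" by simp
    next
      fix \<sigma> \<tau> assume "?Q \<sigma>" "?Q \<tau>"
      then show "?Q (\<sigma> \<circ> \<tau>)" by (simp add: bij_comp perm_comp[symmetric])
    next
      fix k assume "1 \<le> k" "Suc k \<le> n"
      then show "?Q (transpose k (Suc k))" using fixk by simp
    qed (rule that)
    then show ?thesis by blast
  qed
  show "symmetric_poly n (normal_form n (gpoly A) h)"
    unfolding nf(1) symmetric_poly_def using symr by blast
  show "\<forall>t\<in>Poly_Mapping.keys (normal_form n (gpoly A) h). \<forall>i\<in>{1..n}. Poly_Mapping.lookup t i \<le> d - n"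
    unfolding nf(1)
  proof (intro ballI)
    fix t i assume t: "t \<in> Poly_Mapping.keys r" and i: "i \<in> {1..n}"
    let ?s = "transpose i n"
    have sp: "?s permutes {1..n}" using i assms(1) by (intro permutes_swap_id) auto
    have b: "bij ?s" by simp
    have "Poly_Mapping.lookup r (monmap ?s t) = Poly_Mapping.lookup (perm_poly ?s r) (monmap ?s t)"
      using symr[OF sp] by simp
    also have "\<dots> = Poly_Mapping.lookup r t" by (rule lookup_perm[OF b])
    finally have "monmap ?s t \<in> Poly_Mapping.keys r" using t by (simp add: in_keys_iff)
    then have "Poly_Mapping.lookup (monmap ?s t) n \<le> d - n"
      using nf(2) assms(1) unfolding Vred_def by auto
    moreover have "Poly_Mapping.lookup (monmap ?s t) n = Poly_Mapping.lookup t i"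
      by (simp add: lookup_monmap[OF b])
    ultimately show "Poly_Mapping.lookup t i \<le> d - n" by simp
  qed
qed

end
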